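(* Let $G=\langle S_k\mid K\rangle$ be a finitely generated semigroup as described in the context with $K$ primitive, $\mathcal{A}$ a finite alphabet, and $X_{\mathbf{A}}$ a hom Markov tree shift on $G$ with $\mathbf{A}=(A,\dots,A)$. If $A$ is primitive, then the topological entropy $h=\lim_{n\to\infty}\log p_n/|\Delta_n|$ exists and equals $h^{(s)}(X_{\mathbf{A}})$.
   Context: Let $K$ be a $k\times k$ $\{0,1\}$-matrix indexed by $S_k=\{s_1,\dots,s_k\}$ and $G=\langle S_k\mid K\rangle$ the semigroup generated by $S_k$ with relations $s_is_j=1_G$ iff $K(s_i,s_j)=0$. Every $g\in G$ has a unique minimal representation $g=g_1\cdots g_n$ ($g_l\in S_k$, $K(g_l,g_{l+1})=1$), $|g|=n$. $\Delta_n=\{h\in G:|h|\le n\}$ and $\bar{\Delta}^{(g)}_n=\{gh: |h|\le n,\ |gh|=|g|+|h|\}$. A pattern $u:H\to\mathcal{A}$ ($H\subset G$ finite) is accepted by $t\in\mathcal{A}^G$ if there is $g$ with $t_{gh}=u_h$ for all $h\in H$; $p_n$ (resp. $p^{(g)}_n$) is the number of patterns on $\Delta_n$ (resp. $\bar{\Delta}^{(g)}_n$) accepted by some element of the shift. For a $k$-tuple $\mathbf{A}=(A_1,\dots,A_k)$ of $\{0,1\}$-matrices indexed by $\mathcal{A}$, $X_{\mathbf{A}}=\{t\in\mathcal{A}^G: A_i(t_g,t_{gs_i})=1 \text{ for all } g,i \text{ with } |gs_i|=|g|+1\}$; it is hom if all $A_i$ equal one matrix $A$. The $i$th stem entropy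 is $h^{(s_i)}=\limsup_n\log p^{(s_i)}_n/|\bar{\Delta}^{(s_i)}_n|$; since $K$ is primitive these coincide and $h^{(s)}$ denotes their common value. A matrix is primitive if some power has all entries positive. *)

theory Defs
  imports "HOL-Analysis.Analysis"
begin

text \<open>Generators s_1..s_k are encoded as 0..k-1; K :: nat => nat => nat is the
{0,1}-matrix (entries on {0..<k}). Elements of G are their unique minimal
representations: lists g_1...g_n with K(g_l,g_(l+1)) = 1.\<close>

definition is_min_rep :: "nat \<Rightarrow> (nat \<Rightarrow> nat \<Rightarrow> nat) \<Rightarrow> nat list \<Rightarrow> bool" where
  "is_min_rep k K w \<longleftrightarrow> set w \<subseteq> {..<k} \<and> (\<forall>l. Suc l < length w \<longrightarrow> K (w ! l) (w ! Suc l) = 1)"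

definition semigrp :: "nat \<Rightarrow> (nat \<Rightarrow> nat \<Rightarrow> nat) \<Rightarrow> nat list set" where
  "semigrp k K = {w. is_min_rep k K w}"

text \<open>Product in G: concatenate, cancelling s_i s_j = 1 whenever K(s_i,s_j) = 0.\<close>
function gmul :: "(nat \<Rightarrow> nat \<Rightarrow> nat) \<Rightarrow> nat list \<Rightarrow> nat list \<Rightarrow> nat list" where
  "gmul K g h = (if g = [] \<or> h = [] then g @ h
                 else if K (last g) (hd h) = 0 then gmul K (butlast g) (tl h)
                 else g @ h)"
  by pat_completeness auto
termination
  by (relation "Wellfounded.measure (\<lambda>(K, g, h). length g)") auto

fun mpow :: "'i set \<Rightarrow> ('i \<Rightarrow> 'i \<Rightarrow> nat) \<Rightarrow> nat \<Rightarrow> 'i \<Rightarrow> 'i \<Rightarrow> nat" where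
  "mpow I M 0 i j = (if i = j then 1 else 0)"
| "mpow I M (Suc m) i j = (\<Sum>l\<in>I. mpow I M m i l * M l j)"

definition primitive_on :: "'i set \<Rightarrow> ('i \<Rightarrow> 'i \<Rightarrow> nat) \<Rightarrow> bool" where
  "primitive_on I M \<longleftrightarrow> (\<exists>m>0. \<forall>i\<in>I. \<forall>j\<in>I. mpow I M m i j > 0)"

definition zero_one_on :: "'i set \<Rightarrow> ('i \<Rightarrow> 'i \<Rightarrow> nat) \<Rightarrow> bool" where
  "zero_one_on I M \<longleftrightarrow> (\<forall>i\<in>I. \<forall>j\<in>I. M i j \<in> {0, 1})"

definition hom_tree_shift :: "nat \<Rightarrow> (nat \<Rightarrow> nat \<Rightarrow> nat) \<Rightarrow> ('a \<Rightarrow> 'a \<Rightarrow> nat) \<Rightarrow> (nat list \<Rightarrow> 'a) set" where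
  "hom_tree_shift k K A = {t. \<forall>g\<in>semigrp k K. \<forall>i<k.
      length (gmul K g [i]) = length g + 1 \<longrightarrow> A (t g) (t (gmul K g [i])) = 1}"

definition accepted_patterns :: "nat \<Rightarrow> (nat \<Rightarrow> nat \<Rightarrow> nat) \<Rightarrow> (nat list \<Rightarrow> 'a) set \<Rightarrow> nat list set
    \<Rightarrow> (nat list \<Rightarrow> 'a option) set" where
  "accepted_patterns k K X H = {u. \<exists>t\<in>X. \<exists>g\<in>semigrp k K.
      u = (\<lambda>h. if h \<in> H then Some (t (gmul K g h)) else None)}"

definition Delta :: "nat \<Rightarrow> (nat \<Rightarrow> nat \<Rightarrow> nat) \<Rightarrow> nat \<Rightarrow> nat list set" where
  "Delta k K n = {h \<in> semigrp k K. length h \<le> n}"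

definition Delta_bar :: "nat \<Rightarrow> (nat \<Rightarrow> nat \<Rightarrow> nat) \<Rightarrow> nat list \<Rightarrow> nat \<Rightarrow> nat list set" where
  "Delta_bar k K g n = {gmul K g h | h. h \<in> semigrp k K \<and> length h \<le> n
                         \<and> length (gmul K g h) = length g + length h}"

definition p_count :: "nat \<Rightarrow> (nat \<Rightarrow> nat \<Rightarrow> nat) \<Rightarrow> (nat list \<Rightarrow> 'a) set \<Rightarrow> nat \<Rightarrow> nat" where
  "p_count k K X n = card (accepted_patterns k K X (Delta k K n))"

definition p_stem :: "nat \<Rightarrow> (nat \<Rightarrow> nat \<Rightarrow> nat) \<Rightarrow> (nat list \<Rightarrow> 'a) set \<Rightarrow> nat list \<Rightarrow> nat \<Rightarrow> nat" where
  "p_stem k K X g n = card (accepted_patterns k K X (Delta_bar k K g n))"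

definition stem_entropy :: "nat \<Rightarrow> (nat \<Rightarrow> nat \<Rightarrow> nat) \<Rightarrow> (nat list \<Rightarrow> 'a) set \<Rightarrow> nat \<Rightarrow> ereal" where
  "stem_entropy k K X i = limsup (\<lambda>n. ereal (ln (real (p_stem k K X [i] n))
                                         / real (card (Delta_bar k K [i] n))))"

end

theory Submission
  imports Defs "HOL-Library.FuncSet"
begin


declare gmul.simps[simp del]

lemma gmul_Nil1[simp]: "gmul K [] h = h"
  by (subst gmul.simps) simp

lemma gmul_Nil2[simp]: "gmul K g [] = g"
  by (subst gmul.simps) simp

lemma gmul_cancel: "g \<noteq> [] \<Longrightarrow> K (last g) x = 0 \<Longrightarrow> gmul K g (x#h) = gmul K (butlast g) h"
  by (subst gmul.simps) simp

lemma gmul_nc: "g = [] \<or> K (last g) x \<noteq> 0 \<Longrightarrow> gmul K g (x#h) = g @ x # h"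
  by (subst gmul.simps) auto

lemma gmul_suffix: "length h \<le> length s \<Longrightarrow> gmul K (pre @ s) h = pre @ gmul K s h"
proof (induction h arbitrary: s)
  case Nil thus ?case by simp
next
  case (Cons x h)
  then have sne: "s \<noteq> []" by auto
  show ?case
  proof (cases "K (last s) x = 0")
    case True
    have "gmul K (pre @ s) (x#h) = gmul K (butlast (pre @ s)) h"
      using True sne by (simp add: gmul_cancel)
    also have "butlast (pre @ s) = pre @ butlast s" using sne by (simp add: butlast_append)
    also have "gmul K (pre @ butlast s) h = pre @ gmul K (butlast s) h"
      using Cons by (intro Cons.IH) auto
    also have "gmul K (butlast s) h = gmul K s (x#h)" using True sne by (simp add: gmul_cancel)
    finally show ?thesis .
  next
    case False
    then show ?thesis using sne by (simp add: gmul_nc)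
  qed
qed

lemma gmul_single_len: "length (gmul K g [x]) = length g + 1 \<Longrightarrow> gmul K g [x] = g @ [x]"
  by (cases "g = [] \<or> K (last g) x \<noteq> 0") (auto simp: gmul_nc gmul_cancel)

lemma is_min_rep_Nil[simp]: "is_min_rep k K []"
  by (simp add: is_min_rep_def)

lemma is_min_rep_Cons:
  "is_min_rep k K (x#q) \<longleftrightarrow> x < k \<and> is_min_rep k K q \<and> (q = [] \<or> K x (hd q) = 1)"
proof -
  have e: "(\<forall>l. Suc l < length (x#q) \<longrightarrow> K ((x#q)!l) ((x#q)!Suc l) = 1) \<longleftrightarrow>
     (q \<noteq> [] \<longrightarrow> K x (q!0) = 1) \<and> (\<forall>l. Suc l < length q \<longrightarrow> K (q!l) (q!Suc l) = 1)"
  proof (intro iffI conjI allI impI)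
    assume H: "\<forall>l. Suc l < length (x#q) \<longrightarrow> K ((x#q)!l) ((x#q)!Suc l) = 1"
    { assume "q \<noteq> []" then show "K x (q!0) = 1" using H[rule_format, of 0] by simp }
    { fix l assume "Suc l < length q" then show "K (q!l) (q!Suc l) = 1" using H[rule_format, of "Suc l"] by simp }
  next
    fix l assume H: "(q \<noteq> [] \<longrightarrow> K x (q!0) = 1) \<and> (\<forall>l. Suc l < length q \<longrightarrow> K (q!l) (q!Suc l) = 1)"
      and l: "Suc l < length (x#q)"
    show "K ((x#q)!l) ((x#q)!Suc l) = 1"
    proof (cases l)
      case 0 thus ?thesis using H l by auto
    next
      case (Suc l') thus ?thesis using H l by auto
    qed
  qed
  show ?thesis unfolding is_min_rep_def e by (cases q) auto
qed

lemma is_min_rep_append: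
  "is_min_rep k K (u@v) \<longleftrightarrow> is_min_rep k K u \<and> is_min_rep k K v \<and> (u = [] \<or> v = [] \<or> K (last u) (hd v) = 1)"
proof (induction u)
  case Nil thus ?case by simp
next
  case (Cons x u)
  show ?case
  proof (cases u)
    case Nil thus ?thesis by (cases v) (simp_all add: is_min_rep_Cons)
  next
    case (Cons y u')
    have "is_min_rep k K ((x#u)@v) \<longleftrightarrow> x < k \<and> is_min_rep k K (u@v) \<and> K x y = 1"
      using Cons by (simp add: is_min_rep_Cons)
    also have "\<dots> \<longleftrightarrow> x < k \<and> K x y = 1 \<and> is_min_rep k K u \<and> is_min_rep k K v \<and> (v = [] \<or> K (last u) (hd v) = 1)"
      using Cons.IH Cons by auto
    also have "\<dots> \<longleftrightarrow> is_min_rep k K (x#u) \<and> is_min_rep k K v \<and> (x#u = [] \<or> v = [] \<or> K (last (x#u)) (hd v) = 1)"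
      using Cons by (auto simp: is_min_rep_Cons)
    finally show ?thesis .
  qed
qed

lemma semigrp_iff: "w \<in> semigrp k K \<longleftrightarrow> is_min_rep k K w"
  by (simp add: semigrp_def)

lemma is_min_rep_snoc:
  "is_min_rep k K (w@[x]) \<longleftrightarrow> is_min_rep k K w \<and> x < k \<and> (w = [] \<or> K (last w) x = 1)"
  by (simp add: is_min_rep_append is_min_rep_Cons)

lemma is_min_rep_lt: "is_min_rep k K w \<Longrightarrow> y \<in> set w \<Longrightarrow> y < k"
  by (auto simp: is_min_rep_def)

lemma finite_min_rep_le: "finite {q. is_min_rep k K q \<and> length q \<le> n}"
proof -
  have "{q. is_min_rep k K q \<and> length q \<le> n} \<subseteq> {xs. set xs \<subseteq> {..<k} \<and> length xs \<le> n}"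
    by (auto simp: is_min_rep_def)
  thus ?thesis by (rule finite_subset) (simp add: finite_lists_length_le)
qed

locale TS =
  fixes k :: nat and K :: "nat \<Rightarrow> nat \<Rightarrow> nat" and A :: "'a::finite \<Rightarrow> 'a \<Rightarrow> nat"
  assumes K01: "zero_one_on {..<k} K" and Kprim: "primitive_on {..<k} K"
    and A01: "zero_one_on UNIV A" and Aprim: "primitive_on UNIV A"
begin

abbreviation "W \<equiv> semigrp k K"

lemma K01': "i < k \<Longrightarrow> j < k \<Longrightarrow> K i j \<noteq> 0 \<longleftrightarrow> K i j = 1"
  using K01 unfolding zero_one_on_def by force

lemma A01': "A a b \<noteq> 0 \<longleftrightarrow> A a b = 1"
  using A01 unfolding zero_one_on_def by force

lemma gmul_closed: "g \<in> W \<Longrightarrow> h \<in> W \<Longrightarrow> gmul K g h \<in> W"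
proof (induction h arbitrary: g)
  case Nil thus ?case by simp
next
  case (Cons x h)
  show ?case
  proof (cases "g \<noteq> [] \<and> K (last g) x = 0")
    case True
    have "butlast g \<in> W" using Cons.prems(1)
      by (metis append_butlast_last_id True is_min_rep_append semigrp_iff)
    moreover have "h \<in> W" using Cons.prems(2) by (simp add: semigrp_iff is_min_rep_Cons)
    ultimately show ?thesis using True by (simp add: gmul_cancel Cons.IH)
  next
    case False
    have "g = [] \<or> K (last g) x = 1"
    proof (cases "g = []")
      case False
      have "last g < k" using Cons.prems(1) False by (auto simp: semigrp_iff intro: is_min_rep_lt)
      moreover have "x < k" using Cons.prems(2) by (simp add: semigrp_iff is_min_rep_Cons)
      ultimately show ?thesis using \<open>\<not> (g \<noteq> [] \<and> K (last g) x = 0)\<close> False K01' by blast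
    qed simp
    then show ?thesis using Cons.prems False
      by (auto simp: gmul_nc semigrp_iff is_min_rep_append)
  qed
qed

definition Rs :: "nat \<Rightarrow> nat set" where "Rs i = {j. j < k \<and> K i j \<noteq> 0}"

lemma Rs_sub: "Rs i \<subseteq> {..<k}" by (auto simp: Rs_def)
lemma finite_Rs[simp]: "finite (Rs i)" using Rs_sub finite_subset by blast

definition fw :: "nat \<Rightarrow> nat \<Rightarrow> nat list set" where
  "fw i n = {q. is_min_rep k K (i#q) \<and> length q \<le> n}"

definition tree :: "nat set \<Rightarrow> nat \<Rightarrow> nat list set" where
  "tree Z n = insert [] {j#q | j q. j \<in> Z \<and> q \<in> fw j n}"

lemma finite_fw[simp]: "finite (fw i n)"
proof -
  have "fw i n \<subseteq> {q. is_min_rep k K q \<and> length q \<le> n}"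
    by (auto simp: fw_def is_min_rep_Cons)
  thus ?thesis using finite_min_rep_le finite_subset by blast
qed

lemma Nil_fw[simp]: "i < k \<Longrightarrow> [] \<in> fw i n"
  by (simp add: fw_def is_min_rep_Cons)

lemma fw_0: "i < k \<Longrightarrow> fw i 0 = {[]}"
  by (auto simp: fw_def is_min_rep_Cons)

lemma fw_Suc: "i < k \<Longrightarrow> fw i (Suc n) = tree (Rs i) n"
proof (intro set_eqI iffI)
  fix q assume i: "i < k" and q: "q \<in> fw i (Suc n)"
  show "q \<in> tree (Rs i) n"
  proof (cases q)
    case Nil thus ?thesis by (simp add: tree_def)
  next
    case (Cons x q')
    then have "x < k" "K i x = 1" "is_min_rep k K (x#q')" "length q' \<le> n"
      using q by (auto simp: fw_def is_min_rep_Cons)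
    then show ?thesis using Cons by (auto simp: tree_def Rs_def fw_def)
  qed
next
  fix q assume i: "i < k" and q: "q \<in> tree (Rs i) n"
  show "q \<in> fw i (Suc n)"
  proof (cases q)
    case Nil thus ?thesis using i by simp
  next
    case (Cons x q')
    then have "x \<in> Rs i" "q' \<in> fw x n" using q by (auto simp: tree_def)
    then have "x < k" "K i x = 1" "is_min_rep k K (x#q')" "length q' \<le> n"
      using K01' i by (auto simp: Rs_def fw_def)
    then show ?thesis using Cons i by (auto simp: fw_def is_min_rep_Cons)
  qed
qed

lemma tree_eq: "tree Z n = insert [] (\<Union>j\<in>Z. (\<lambda>q. j#q) ` fw j n)"
  by (auto simp: tree_def)

lemma finite_tree[simp]: "finite Z \<Longrightarrow> finite (tree Z n)"
  by (simp add: tree_eq)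

lemma card_tree: "finite Z \<Longrightarrow> card (tree Z n) = 1 + (\<Sum>j\<in>Z. card (fw j n))"
proof -
  assume fZ: "finite Z"
  have "card (\<Union>j\<in>Z. (\<lambda>q. j#q) ` fw j n) = (\<Sum>j\<in>Z. card ((\<lambda>q. j#q) ` fw j n))"
    by (rule card_UN_disjoint) (auto simp: fZ)
  also have "\<dots> = (\<Sum>j\<in>Z. card (fw j n))"
    by (intro sum.cong refl card_image) (auto simp: inj_on_def)
  finally show ?thesis unfolding tree_eq
    by (subst card_insert_disjoint) (auto simp: fZ)
qed

lemma Delta_Suc: "Delta k K (Suc n) = tree {..<k} n"
proof (intro set_eqI iffI)
  fix w assume "w \<in> Delta k K (Suc n)"
  then show "w \<in> tree {..<k} n"
    by (cases w) (auto simp: Delta_def tree_def fw_def semigrp_iff is_min_rep_Cons)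
next
  fix w assume "w \<in> tree {..<k} n"
  then show "w \<in> Delta k K (Suc n)"
    by (cases w) (auto simp: Delta_def tree_def fw_def semigrp_iff)
qed

lemma Delta_bar_eq: "i < k \<Longrightarrow> Delta_bar k K [i] n = (\<lambda>q. i#q) ` fw i n"
proof (intro set_eqI iffI)
  fix w assume i: "i < k" and "w \<in> Delta_bar k K [i] n"
  then obtain h where h: "h \<in> W" "length h \<le> n" "length (gmul K [i] h) = 1 + length h"
    and w: "w = gmul K [i] h" by (auto simp: Delta_bar_def)
  show "w \<in> (\<lambda>q. i#q) ` fw i n"
  proof (cases h)
    case Nil thus ?thesis using w i by (auto simp: fw_def is_min_rep_Cons)
  next
    case (Cons x h')
    show ?thesis
    proof (cases "K i x = 0")
      case True
      then have "gmul K [i] h = h'" using Cons by (simp add: gmul_cancel)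
      then show ?thesis using h Cons by simp
    next
      case False
      then have "gmul K [i] h = i # h" using Cons by (simp add: gmul_nc)
      moreover have "x < k" using h Cons by (simp add: semigrp_iff is_min_rep_Cons)
      ultimately show ?thesis using w h i False Cons K01'[of i x]
        by (auto simp: fw_def semigrp_iff is_min_rep_Cons)
    qed
  qed
next
  fix w assume i: "i < k" and "w \<in> (\<lambda>q. i#q) ` fw i n"
  then obtain q where q: "q \<in> fw i n" and w: "w = i#q" by auto
  have "gmul K [i] q = i # q"
  proof (cases q)
    case (Cons x q')
    then have "K i x = 1" using q by (simp add: fw_def is_min_rep_Cons)
    then show ?thesis using Cons by (simp add: gmul_nc)
  qed simp
  then show "w \<in> Delta_bar k K [i] n" using q w
    unfolding Delta_bar_def by (auto simp: fw_def semigrp_iff is_min_rep_Cons intro!: exI[of _ q])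
qed

lemma card_Delta_bar: "i < k \<Longrightarrow> card (Delta_bar k K [i] n) = card (fw i n)"
  by (simp add: Delta_bar_eq card_image inj_on_def)

end


lemma mpow_Suc_left:
  assumes "finite I" "i \<in> I" "j \<in> I"
  shows "mpow I M (Suc m) i j = (\<Sum>l\<in>I. M i l * mpow I M m l j)"
  using assms(3)
proof (induction m arbitrary: j)
  case 0
  have "mpow I M (Suc 0) i j = (\<Sum>l\<in>I. (if i = l then 1 else 0) * M l j)" by simp
  also have "\<dots> = (\<Sum>l\<in>I. (if i = l then M l j else 0))"
    by (intro sum.cong) auto
  also have "\<dots> = M i j" using assms by simp
  also have "\<dots> = (\<Sum>l\<in>I. (if l = j then M i l else 0))" using 0 assms by simp
  also have "\<dots> = (\<Sum>l\<in>I. M i l * mpow I M 0 l j)" by (intro sum.cong) auto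
  finally show ?case .
next
  case (Suc m)
  have "mpow I M (Suc (Suc m)) i j = (\<Sum>l\<in>I. mpow I M (Suc m) i l * M l j)" by simp
  also have "\<dots> = (\<Sum>l\<in>I. (\<Sum>l'\<in>I. M i l' * mpow I M m l' l) * M l j)"
  proof (rule sum.cong[OF refl])
    fix l assume "l \<in> I"
    show "mpow I M (Suc m) i l * M l j = (\<Sum>l'\<in>I. M i l' * mpow I M m l' l) * M l j"
      by (simp only: Suc.IH[OF \<open>l \<in> I\<close>])
  qed
  also have "\<dots> = (\<Sum>l\<in>I. \<Sum>l'\<in>I. M i l' * mpow I M m l' l * M l j)"
    by (simp add: sum_distrib_right)
  also have "\<dots> = (\<Sum>l'\<in>I. \<Sum>l\<in>I. M i l' * mpow I M m l' l * M l j)"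
    by (rule sum.swap)
  also have "\<dots> = (\<Sum>l'\<in>I. M i l' * (\<Sum>l\<in>I. mpow I M m l' l * M l j))"
    by (simp add: sum_distrib_left mult.assoc)
  also have "\<dots> = (\<Sum>l'\<in>I. M i l' * mpow I M (Suc m) l' j)" by simp
  finally show ?case .
qed

lemma prim_row:
  assumes "primitive_on I M" "finite I" "i \<in> I"
  shows "\<exists>l\<in>I. M i l \<noteq> 0"
proof (rule ccontr)
  assume H: "\<not> (\<exists>l\<in>I. M i l \<noteq> 0)"
  obtain m where m: "m > 0" "\<forall>i\<in>I. \<forall>j\<in>I. mpow I M m i j > 0"
    using assms(1) unfolding primitive_on_def by blast
  then obtain m' where m': "m = Suc m'" by (cases m) auto
  have "mpow I M m i i = 0" using H m' mpow_Suc_left[OF assms(2,3,3)] by simp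
  moreover have "0 < mpow I M m i i" using m(2) assms(3) by blast
  ultimately show False by simp
qed

lemma prim_col:
  assumes "primitive_on I M" "i \<in> I"
  shows "\<exists>l\<in>I. M l i \<noteq> 0"
proof (rule ccontr)
  assume H: "\<not> (\<exists>l\<in>I. M l i \<noteq> 0)"
  obtain m where m: "m > 0" "\<forall>i\<in>I. \<forall>j\<in>I. mpow I M m i j > 0"
    using assms(1) unfolding primitive_on_def by blast
  then obtain m' where m': "m = Suc m'" by (cases m) auto
  have "mpow I M m i i = 0" using H m' by simp
  moreover have "0 < mpow I M m i i" using m(2) assms(2) by blast
  ultimately show False by simp
qed

context TS begin

lemma A_row: "\<exists>b. A a b = 1"
proof -
  have "\<exists>l\<in>UNIV. A a l \<noteq> 0" by (rule prim_row[OF Aprim]) auto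
  then show ?thesis using A01' by auto
qed

lemma A_col: "\<exists>c. A c b = 1"
  using prim_col[OF Aprim, of b] A01' by auto

lemma K_row: "i < k \<Longrightarrow> \<exists>j<k. K i j = 1"
proof -
  assume i: "i < k"
  have "\<exists>l\<in>{..<k}. K i l \<noteq> 0" by (rule prim_row[OF Kprim]) (use i in auto)
  then show ?thesis using K01' i by auto
qed

lemma Rs_ne: "i < k \<Longrightarrow> Rs i \<noteq> {}"
  using K_row unfolding Rs_def by fastforce

definition VL :: "nat list set \<Rightarrow> (nat list \<Rightarrow> 'a) set" where
  "VL S = {\<tau>. (\<forall>w. w \<notin> S \<longrightarrow> \<tau> w = undefined) \<and> (\<forall>w x. w \<in> S \<longrightarrow> w@[x] \<in> S \<longrightarrow> A (\<tau> w) (\<tau> (w@[x])) = 1)}"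

definition Lab :: "nat list set \<Rightarrow> 'a \<Rightarrow> (nat list \<Rightarrow> 'a) set" where
  "Lab S a = {\<tau> \<in> VL S. \<tau> [] = a}"

lemma VL_sub: "VL S \<subseteq> PiE S (\<lambda>_. UNIV)"
  by (auto simp: VL_def PiE_def extensional_def)

lemma finite_VL[simp]: "finite S \<Longrightarrow> finite (VL S)"
  by (rule finite_subset[OF VL_sub]) (simp add: finite_PiE)

lemma finite_Lab[simp]: "finite S \<Longrightarrow> finite (Lab S a)"
  unfolding Lab_def by simp

lemma card_VL_sum: "finite S \<Longrightarrow> card (VL S) = (\<Sum>a\<in>UNIV. card (Lab S a))"
proof -
  assume fS: "finite S"
  have "VL S = (\<Union>a\<in>UNIV. Lab S a)" by (auto simp: Lab_def)
  moreover have "card (\<Union>a\<in>UNIV. Lab S a) = (\<Sum>a\<in>UNIV. card (Lab S a))"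
    by (rule card_UN_disjoint) (auto simp: Lab_def fS)
  ultimately show ?thesis by simp
qed

lemma Lab_single: "Lab {[]} a = {\<lambda>w. if w = [] then a else undefined}"
  by (auto simp: Lab_def VL_def)

lemma card_Lab_single[simp]: "card (Lab {[]} a) = 1"
  by (simp add: Lab_single)

lemma mem_tree: "w \<in> tree Z n \<longleftrightarrow> w = [] \<or> (w \<noteq> [] \<and> hd w \<in> Z \<and> tl w \<in> fw (hd w) n)"
  by (cases w) (auto simp: tree_def)

lemma card_Lab_tree:
  assumes Z: "Z \<subseteq> {..<k}"
  shows "card (Lab (tree Z n) a) = (\<Prod>j\<in>Z. \<Sum>b\<in>UNIV. A a b * card (Lab (fw j n) b))"
proof -
  have fZ: "finite Z" using Z finite_subset by blast
  define B where "B j = (SIGMA b:{b. A a b = 1}. Lab (fw j n) b)" for j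
  define \<phi> where "\<phi> f = (\<lambda>j\<in>Z. (f [j], \<lambda>q\<in>fw j n. f (j#q)))" for f :: "nat list \<Rightarrow> 'a"
  define \<psi> where "\<psi> G = (\<lambda>w. if w = [] then a else if hd w \<in> Z \<and> tl w \<in> fw (hd w) n
       then snd (G (hd w)) (tl w) else undefined)" for G :: "nat \<Rightarrow> 'a \<times> (nat list \<Rightarrow> 'a)"
  have bij: "bij_betw \<phi> (Lab (tree Z n) a) (PiE Z B)"
  proof (rule bij_betw_byWitness[where f' = \<psi>])
    show "\<forall>f\<in>Lab (tree Z n) a. \<psi> (\<phi> f) = f"
    proof
      fix f assume f: "f \<in> Lab (tree Z n) a"
      show "\<psi> (\<phi> f) = f"
      proof
        fix w
        show "\<psi> (\<phi> f) w = f w"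
        proof (cases "w = []")
          case True thus ?thesis using f by (simp add: \<psi>_def Lab_def)
        next
          case False
          show ?thesis
          proof (cases "hd w \<in> Z \<and> tl w \<in> fw (hd w) n")
            case True thus ?thesis using False by (simp add: \<psi>_def \<phi>_def)
          next
            case F2: False
            then have "w \<notin> tree Z n" using False by (simp add: mem_tree)
            then have "f w = undefined" using f by (simp add: Lab_def VL_def)
            moreover have "\<psi> (\<phi> f) w = undefined"
              unfolding \<psi>_def by (simp only: if_not_P[OF False] if_not_P[OF F2])
            ultimately show ?thesis by simp
          qed
        qed
      qed
    qed
  next
    show "\<forall>G\<in>PiE Z B. \<phi> (\<psi> G) = G"
    proof
      fix G assume G: "G \<in> PiE Z B"
      show "\<phi> (\<psi> G) = G"
      proof
        fix j
        show "\<phi> (\<psi> G) j = G j"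
        proof (cases "j \<in> Z")
          case False thus ?thesis using G by (simp add: \<phi>_def PiE_def extensional_def)
        next
          case True
          then have jk: "j < k" using Z by auto
          obtain b \<tau> where Gj: "G j = (b, \<tau>)" by (cases "G j")
          have "G j \<in> B j" using G True by (auto simp: PiE_def Pi_def)
          then have bt: "A a b = 1" "\<tau> \<in> Lab (fw j n) b" using Gj by (auto simp: B_def)
          have "(\<lambda>q\<in>fw j n. \<psi> G (j#q)) = \<tau>"
          proof
            fix q show "(\<lambda>q\<in>fw j n. \<psi> G (j#q)) q = \<tau> q"
              using bt True Gj by (auto simp: \<psi>_def Lab_def VL_def)
          qed
          moreover have "\<psi> G [j] = b" using bt True Gj jk by (simp add: \<psi>_def Lab_def)
          ultimately show ?thesis using True Gj by (simp add: \<phi>_def)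
        qed
      qed
    qed
  next
    show "\<phi> ` Lab (tree Z n) a \<subseteq> PiE Z B"
    proof
      fix G assume "G \<in> \<phi> ` Lab (tree Z n) a"
      then obtain f where f: "f \<in> Lab (tree Z n) a" and G: "G = \<phi> f" by auto
      have fv: "\<And>w x. w \<in> tree Z n \<Longrightarrow> w@[x] \<in> tree Z n \<Longrightarrow> A (f w) (f (w@[x])) = 1"
        and fe: "\<And>w. w \<notin> tree Z n \<Longrightarrow> f w = undefined" and f0: "f [] = a"
        using f by (auto simp: Lab_def VL_def)
      have "G j \<in> B j" if j: "j \<in> Z" for j
      proof -
        have jk: "j < k" using j Z by auto
        have "[j] \<in> tree Z n" using j jk by (simp add: mem_tree)
        then have "A a (f [j]) = 1" using fv[of "[]" j] f0 by (simp add: tree_def)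
        moreover have "(\<lambda>q\<in>fw j n. f (j#q)) \<in> Lab (fw j n) (f [j])"
          unfolding Lab_def VL_def
        proof (intro CollectI conjI allI impI)
          fix q x assume "q \<in> fw j n" "q@[x] \<in> fw j n"
          then have "j#q \<in> tree Z n" "(j#q)@[x] \<in> tree Z n" using j by (auto simp: mem_tree)
          then show "A ((\<lambda>q\<in>fw j n. f (j#q)) q) ((\<lambda>q\<in>fw j n. f (j#q)) (q@[x])) = 1"
            using fv[of "j#q" x] \<open>q \<in> fw j n\<close> \<open>q@[x] \<in> fw j n\<close> by simp
        qed (use jk in auto)
        ultimately show ?thesis using j G by (simp add: B_def \<phi>_def)
      qed
      then show "G \<in> PiE Z B" using G by (auto simp: \<phi>_def)
    qed
  next
    show "\<psi> ` PiE Z B \<subseteq> Lab (tree Z n) a"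
    proof
      fix f assume "f \<in> \<psi> ` PiE Z B"
      then obtain G where G: "G \<in> PiE Z B" and f: "f = \<psi> G" by auto
      have GB: "A a (fst (G j)) = 1 \<and> snd (G j) \<in> Lab (fw j n) (fst (G j))" if j: "j \<in> Z" for j
      proof -
        have "G j \<in> B j" using G j by (auto simp: PiE_def Pi_def)
        then show ?thesis by (cases "G j") (auto simp: B_def)
      qed
      show "f \<in> Lab (tree Z n) a" unfolding Lab_def VL_def
      proof (intro CollectI conjI allI impI)
        fix w assume "w \<notin> tree Z n"
        then show "f w = undefined" using f by (auto simp: \<psi>_def mem_tree)
      next
        fix w x assume w: "w \<in> tree Z n" and wx: "w@[x] \<in> tree Z n"
        show "A (f w) (f (w@[x])) = 1"
        proof (cases "w = []")
          case True
          then have x: "x \<in> Z" using wx by (simp add: mem_tree)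
          then have "x < k" using Z by auto
          then have "f [x] = snd (G x) []" using f x by (simp add: \<psi>_def)
          also have "\<dots> = fst (G x)" using GB[OF x] by (simp add: Lab_def)
          finally show ?thesis using True f GB[OF x] by (simp add: \<psi>_def)
        next
          case False
          have h: "hd w \<in> Z" "tl w \<in> fw (hd w) n" "tl w @ [x] \<in> fw (hd w) n"
            using w wx False by (auto simp: mem_tree)
          have "f w = snd (G (hd w)) (tl w)" using f False h by (simp add: \<psi>_def)
          moreover have "f (w@[x]) = snd (G (hd w)) (tl w @ [x])" using f False h by (simp add: \<psi>_def)
          ultimately show ?thesis using GB[OF h(1)] h by (auto simp: Lab_def VL_def)
        qed
      qed (use f in \<open>simp add: \<psi>_def\<close>)
    qed
  qed
  have "card (Lab (tree Z n) a) = card (PiE Z B)" using bij by (rule bij_betw_same_card)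
  also have "\<dots> = (\<Prod>j\<in>Z. card (B j))" using fZ by (rule card_PiE)
  also have "\<dots> = (\<Prod>j\<in>Z. \<Sum>b\<in>{b. A a b = 1}. card (Lab (fw j n) b))"
    by (intro prod.cong refl) (simp add: B_def)
  also have "\<dots> = (\<Prod>j\<in>Z. \<Sum>b\<in>UNIV. A a b * card (Lab (fw j n) b))"
  proof (intro prod.cong refl)
    fix j
    have "(\<Sum>b\<in>UNIV. A a b * card (Lab (fw j n) b)) = (\<Sum>b\<in>UNIV. if A a b = 1 then card (Lab (fw j n) b) else 0)"
      by (intro sum.cong refl) (metis A01' mult_1 mult_zero_left)
    also have "\<dots> = (\<Sum>b\<in>{b. A a b = 1}. card (Lab (fw j n) b))"
      by (simp add: sum.inter_filter[symmetric])
    finally show "(\<Sum>b\<in>{b. A a b = 1}. card (Lab (fw j n) b)) = (\<Sum>b\<in>UNIV. A a b * card (Lab (fw j n) b))" by simp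
  qed
  finally show ?thesis .
qed

fun Fa :: "nat \<Rightarrow> nat \<Rightarrow> 'a \<Rightarrow> nat" where
  "Fa i 0 a = 1"
| "Fa i (Suc n) a = (\<Prod>j\<in>Rs i. \<Sum>b\<in>UNIV. A a b * Fa j n b)"

lemma Fa_card: "i < k \<Longrightarrow> Fa i n a = card (Lab (fw i n) a)"
proof (induction n arbitrary: i a)
  case 0 thus ?case by (simp add: fw_0)
next
  case (Suc n)
  have "card (Lab (fw i (Suc n)) a) = (\<Prod>j\<in>Rs i. \<Sum>b\<in>UNIV. A a b * card (Lab (fw j n) b))"
    using Suc.prems by (simp add: fw_Suc card_Lab_tree Rs_sub)
  also have "\<dots> = (\<Prod>j\<in>Rs i. \<Sum>b\<in>UNIV. A a b * Fa j n b)"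
    by (intro prod.cong sum.cong refl) (simp add: Suc.IH Rs_def)
  finally show ?case by simp
qed

lemma card_fw_0: "i < k \<Longrightarrow> card (fw i 0) = 1" by (simp add: fw_0)

lemma card_fw_Suc: "i < k \<Longrightarrow> card (fw i (Suc n)) = 1 + (\<Sum>j\<in>Rs i. card (fw j n))"
  by (simp add: fw_Suc card_tree)

end


context TS begin

abbreviation "X \<equiv> hom_tree_shift k K A"

fun ext_r :: "nat list set \<Rightarrow> (nat list \<Rightarrow> 'a) \<Rightarrow> nat list \<Rightarrow> 'a" where
  "ext_r S f [] = f []"
| "ext_r S f (x#r) = (if rev (x#r) \<in> S then f (rev (x#r)) else (SOME b. A (ext_r S f r) b = 1))"

definition extd :: "nat list set \<Rightarrow> (nat list \<Rightarrow> 'a) \<Rightarrow> nat list \<Rightarrow> 'a" where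
  "extd S f w = ext_r S f (rev w)"

lemma ext_Nil: "extd S f [] = f []" by (simp add: extd_def)

lemma ext_snoc: "extd S f (w@[x]) = (if w@[x] \<in> S then f (w@[x]) else (SOME b. A (extd S f w) b = 1))"
  by (simp add: extd_def)

lemma extend_agree:
  assumes "[] \<in> S" "w \<in> S" shows "extd S f w = f w"
  using assms by (cases w rule: rev_exhaust) (simp_all add: ext_Nil ext_snoc)

lemma extend_mem:
  assumes S0: "[] \<in> S" and pc: "\<And>w x. w@[x] \<in> S \<Longrightarrow> w \<in> S" and f: "f \<in> VL S"
  shows "extd S f \<in> X"
  unfolding hom_tree_shift_def
proof (intro CollectI ballI allI impI)
  fix g i assume g: "g \<in> W" and i: "i < k" and len: "length (gmul K g [i]) = length g + 1"
  have gm: "gmul K g [i] = g@[i]" using len by (rule gmul_single_len)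
  show "A (extd S f g) (extd S f (gmul K g [i])) = 1"
  proof (cases "g@[i] \<in> S")
    case True
    then have "g \<in> S" using pc by blast
    then show ?thesis using True f gm extend_agree[OF S0] by (simp add: VL_def)
  next
    case False
    have "A (extd S f g) (SOME b. A (extd S f g) b = 1) = 1" by (rule someI_ex[OF A_row])
    then show ?thesis using False gm by (simp add: ext_snoc)
  qed
qed

lemma finite_accepted:
  fixes T :: "(nat list \<Rightarrow> 'a) set"
  assumes fH: "finite H" shows "finite (accepted_patterns k K T H)"
proof -
  have "accepted_patterns k K T H \<subseteq> (\<lambda>f. \<lambda>h. if h \<in> H then Some (f h) else None) ` PiE H (\<lambda>_. UNIV)"
  proof
    fix u assume "u \<in> accepted_patterns k K T H"
    then obtain t g where u: "u = (\<lambda>h. if h \<in> H then Some (t (gmul K g h)) else None)"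
      unfolding accepted_patterns_def by blast
    have "restrict (\<lambda>h. t (gmul K g h)) H \<in> PiE H (\<lambda>_. UNIV)" by simp
    moreover have "u = (\<lambda>h. if h \<in> H then Some (restrict (\<lambda>h. t (gmul K g h)) H h) else None)"
      unfolding u by (rule ext) simp
    ultimately show "u \<in> (\<lambda>f. \<lambda>h. if h \<in> H then Some (f h) else None) ` PiE H (\<lambda>_. UNIV)"
      by blast
  qed
  moreover have "finite (PiE H (\<lambda>_. UNIV :: 'a set))" using fH by (simp add: finite_PiE)
  ultimately show ?thesis using finite_subset by blast
qed

lemma card_le_patterns:
  assumes S0: "[] \<in> S" and pc: "\<And>w x. w@[x] \<in> S \<Longrightarrow> w \<in> S" and fH: "finite H" and HS: "H \<subseteq> S"
    and FV: "F \<subseteq> VL S"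
    and inj: "inj_on (\<lambda>f. \<lambda>h. if h \<in> H then Some (f h) else None) F"
  shows "card F \<le> card (accepted_patterns k K X H)"
proof -
  let ?r = "\<lambda>f. \<lambda>h. if h \<in> H then Some (f h) else None"
  have "?r ` F \<subseteq> accepted_patterns k K X H"
  proof
    fix u assume "u \<in> ?r ` F"
    then obtain f where f: "f \<in> F" "u = ?r f" by auto
    have m: "extd S f \<in> X" using extend_mem[OF S0 pc] f FV by auto
    have "u = (\<lambda>h. if h \<in> H then Some (extd S f (gmul K [] h)) else None)"
    proof
      fix h show "u h = (if h \<in> H then Some (extd S f (gmul K [] h)) else None)"
        using f HS extend_agree[OF S0, of h f] by auto
    qed
    moreover have "[] \<in> W" by (simp add: semigrp_iff)
    ultimately show "u \<in> accepted_patterns k K X H" using m unfolding accepted_patterns_def by blast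
  qed
  then have "card (?r ` F) \<le> card (accepted_patterns k K X H)"
    by (intro card_mono finite_accepted fH)
  moreover have "card (?r ` F) = card F" using inj by (rule card_image)
  ultimately show ?thesis by simp
qed

lemma Lab_eqI:
  assumes "l1 \<in> Lab S a" "l2 \<in> Lab S b" "\<And>q. q \<in> S \<Longrightarrow> l1 q = l2 q"
  shows "l1 = l2"
proof
  fix q show "l1 q = l2 q" using assms by (cases "q \<in> S") (auto simp: Lab_def VL_def)
qed

lemma VL_eqI:
  assumes "l1 \<in> VL S" "l2 \<in> VL S" "\<And>q. q \<in> S \<Longrightarrow> l1 q = l2 q"
  shows "l1 = l2"
proof
  fix q show "l1 q = l2 q" using assms by (cases "q \<in> S") (auto simp: VL_def)
qed

lemma stem_lb:
  assumes i: "i < k"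
  shows "Fa i n a \<le> p_stem k K X [i] n"
proof -
  define H where "H = Delta_bar k K [i] n"
  have H: "H = (\<lambda>q. i#q) ` fw i n" using i by (simp add: H_def Delta_bar_eq)
  obtain c0 where c0: "A c0 a = 1" using A_col by blast
  define fm where "fm lab = (\<lambda>w. if w = [] then c0 else if w \<in> H then lab (tl w) else undefined)"
    for lab :: "nat list \<Rightarrow> 'a"
  define S where "S = insert [] H"
  define F where "F = fm ` Lab (fw i n) a"
  have NH: "[] \<notin> H" using H by auto
  have fmH: "fm lab (i#q) = lab q" if "q \<in> fw i n" for lab q using that H by (auto simp: fm_def)
  have injfm: "inj_on fm (Lab (fw i n) a)"
  proof (rule inj_onI)
    fix l1 l2 assume l: "l1 \<in> Lab (fw i n) a" "l2 \<in> Lab (fw i n) a" "fm l1 = fm l2"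
    show "l1 = l2"
    proof (rule Lab_eqI[OF l(1,2)])
      fix q assume "q \<in> fw i n" then show "l1 q = l2 q" using fmH l(3) by metis
    qed
  qed
  have pc: "w \<in> S" if "w@[x] \<in> S" for w x
  proof (cases "w = []")
    case True thus ?thesis by (simp add: S_def)
  next
    case False
    have "w@[x] \<in> H" using that by (auto simp: S_def)
    then obtain q where q: "q \<in> fw i n" "w@[x] = i#q" using H by auto
    then obtain q' where q': "w = i#q'" "q = q'@[x]" using False by (cases w) auto
    have "q' \<in> fw i n" using q q' by (auto simp: fw_def is_min_rep_append[where u="i#q'" and v="[x]", simplified])
    then show ?thesis using q' H by (auto simp: S_def)
  qed
  have FV: "F \<subseteq> VL S"
  proof
    fix f assume "f \<in> F"
    then obtain lab where lab: "lab \<in> Lab (fw i n) a" and f: "f = fm lab" by (auto simp: F_def)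
    have lv: "\<And>q x. q \<in> fw i n \<Longrightarrow> q@[x] \<in> fw i n \<Longrightarrow> A (lab q) (lab (q@[x])) = 1"
      and l0: "lab [] = a" using lab by (auto simp: Lab_def VL_def)
    show "f \<in> VL S" unfolding VL_def
    proof (intro CollectI conjI allI impI)
      fix w assume "w \<notin> S" then show "f w = undefined" by (simp add: f fm_def S_def)
    next
      fix w x assume w: "w \<in> S" and wx: "w@[x] \<in> S"
      have wxH: "w@[x] \<in> H" using wx by (simp add: S_def)
      then obtain q where q: "q \<in> fw i n" "w@[x] = i#q" using H by auto
      show "A (f w) (f (w@[x])) = 1"
      proof (cases "w = []")
        case True
        then have "x = i" "q = []" using q by auto
        then have "f (w@[x]) = a" using True f fmH[of "[]"] q l0 by simp
        then show ?thesis using True c0 by (simp add: f fm_def)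
      next
        case False
        then obtain q' where q': "w = i#q'" "q = q'@[x]" using q by (cases w) auto
        have wH: "w \<in> H" using w False by (simp add: S_def)
        then have q'f: "q' \<in> fw i n" using H q' by auto
        have "f w = lab q'" using f fmH q'f q' by simp
        moreover have "f (w@[x]) = lab (q'@[x])" using f fmH q q' by simp
        ultimately show ?thesis using lv q'f q q' by simp
      qed
    qed
  qed
  have inj: "inj_on (\<lambda>f. \<lambda>h. if h \<in> H then Some (f h) else None) F"
  proof (rule inj_onI)
    fix f1 f2 assume f: "f1 \<in> F" "f2 \<in> F" and e: "(\<lambda>h. if h \<in> H then Some (f1 h) else None) = (\<lambda>h. if h \<in> H then Some (f2 h) else None)"
    obtain l1 l2 where l: "l1 \<in> Lab (fw i n) a" "l2 \<in> Lab (fw i n) a" "f1 = fm l1" "f2 = fm l2"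
      using f by (auto simp: F_def)
    have "l1 = l2"
    proof (rule Lab_eqI[OF l(1,2)])
      fix q assume q: "q \<in> fw i n"
      then have "i#q \<in> H" using H by auto
      then have "f1 (i#q) = f2 (i#q)" using fun_cong[OF e, of "i#q"] by simp
      then show "l1 q = l2 q" using l fmH q by simp
    qed
    then show "f1 = f2" using l by simp
  qed
  have "card F \<le> card (accepted_patterns k K X H)"
    by (rule card_le_patterns[OF _ pc _ _ FV inj]) (auto simp: S_def H)
  moreover have "card F = Fa i n a" using injfm i by (simp add: F_def card_image Fa_card)
  ultimately show ?thesis by (simp add: p_stem_def H_def)
qed

lemma Delta_pc: "w@[x] \<in> Delta k K m \<Longrightarrow> w \<in> Delta k K m"
  by (auto simp: Delta_def semigrp_iff is_min_rep_snoc)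

lemma Nil_Delta: "[] \<in> Delta k K m"
  by (simp add: Delta_def semigrp_iff)

lemma finite_Delta[simp]: "finite (Delta k K m)"
proof -
  have "Delta k K m \<subseteq> {q. is_min_rep k K q \<and> length q \<le> m}" by (auto simp: Delta_def semigrp_iff)
  thus ?thesis using finite_min_rep_le finite_subset by blast
qed

lemma count_lb: "card (Lab (tree {..<k} n) a) \<le> p_count k K X (Suc n)"
proof -
  let ?S = "Delta k K (Suc n)"
  have inj: "inj_on (\<lambda>f. \<lambda>h. if h \<in> ?S then Some (f h) else None) (Lab ?S a)"
  proof (rule inj_onI)
    fix f1 f2 assume f: "f1 \<in> Lab ?S a" "f2 \<in> Lab ?S a"
      and e: "(\<lambda>h. if h \<in> ?S then Some (f1 h) else None) = (\<lambda>h. if h \<in> ?S then Some (f2 h) else None)"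
    show "f1 = f2"
    proof (rule Lab_eqI[OF f])
      fix q assume "q \<in> ?S" then show "f1 q = f2 q" using fun_cong[OF e, of q] by simp
    qed
  qed
  have "card (Lab ?S a) \<le> card (accepted_patterns k K X ?S)"
    by (rule card_le_patterns[OF Nil_Delta Delta_pc finite_Delta subset_refl _ inj]) (auto simp: Lab_def)
  then show ?thesis by (simp add: p_count_def Delta_Suc)
qed

lemma patterns_ub:
  assumes HW: "H \<subseteq> W" and fH: "finite H" and len: "\<And>h. h \<in> H \<Longrightarrow> length h \<le> m"
  shows "card (accepted_patterns k K X H) \<le> (\<Sum>\<sigma>\<in>Delta k K m. card (VL (gmul K \<sigma> ` H)))"
proof -
  define pat where "pat \<sigma> \<tau> = (\<lambda>h. if h \<in> H then Some (\<tau> (gmul K \<sigma> h)) else None)"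
    for \<sigma> and \<tau> :: "nat list \<Rightarrow> 'a"
  have sub: "accepted_patterns k K X H \<subseteq> (\<Union>\<sigma>\<in>Delta k K m. pat \<sigma> ` VL (gmul K \<sigma> ` H))"
  proof
    fix u assume "u \<in> accepted_patterns k K X H"
    then obtain t g where t: "t \<in> X" and g: "g \<in> W"
      and u: "u = (\<lambda>h. if h \<in> H then Some (t (gmul K g h)) else None)"
      unfolding accepted_patterns_def by blast
    define pre where "pre = take (length g - m) g"
    define \<sigma> where "\<sigma> = drop (length g - m) g"
    have gs: "g = pre @ \<sigma>" by (simp add: pre_def \<sigma>_def)
    have \<sigma>W: "\<sigma> \<in> W" using g gs by (simp add: semigrp_iff is_min_rep_append)
    have \<sigma>len: "length \<sigma> \<le> m" by (simp add: \<sigma>_def)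
    have gm: "gmul K g h = pre @ gmul K \<sigma> h" if h: "h \<in> H" for h
    proof (cases "length g \<le> m")
      case True
      then have "pre = []" by (simp add: pre_def)
      then show ?thesis using gs by simp
    next
      case False
      then have "length \<sigma> = m" by (simp add: \<sigma>_def)
      then show ?thesis using gs gmul_suffix len[OF h] by simp
    qed
    define \<tau> where "\<tau> = restrict (\<lambda>w. t (pre @ w)) (gmul K \<sigma> ` H)"
    have \<tau>V: "\<tau> \<in> VL (gmul K \<sigma> ` H)" unfolding VL_def
    proof (intro CollectI conjI allI impI)
      fix w assume "w \<notin> gmul K \<sigma> ` H" then show "\<tau> w = undefined" by (simp add: \<tau>_def)
    next
      fix w x assume w: "w \<in> gmul K \<sigma> ` H" and wx: "w@[x] \<in> gmul K \<sigma> ` H"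
      obtain h1 where h1: "h1 \<in> H" "w = gmul K \<sigma> h1" using w by auto
      obtain h2 where h2: "h2 \<in> H" "w@[x] = gmul K \<sigma> h2" using wx by auto
      have W1: "pre @ w \<in> W" using gmul_closed[OF g, of h1] h1 HW gm by auto
      have W2: "(pre @ w) @ [x] \<in> W" using gmul_closed[OF g, of h2] h2 HW gm by auto
      then have "is_min_rep k K ((pre @ w) @ [x])" by (simp only: semigrp_iff)
      then have x: "x < k" and ncx: "pre @ w = [] \<or> K (last (pre @ w)) x = 1"
        by (simp_all only: is_min_rep_snoc)
      have gx: "gmul K (pre @ w) [x] = (pre @ w) @ [x]" using ncx by (auto simp: gmul_nc)
      have tt: "\<forall>g\<in>W. \<forall>i<k. length (gmul K g [i]) = length g + 1 \<longrightarrow> A (t g) (t (gmul K g [i])) = 1"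
        using t unfolding hom_tree_shift_def by blast
      have "length (gmul K (pre @ w) [x]) = length (pre @ w) + 1" using gx by simp
      then have "A (t (pre @ w)) (t (gmul K (pre @ w) [x])) = 1"
        using tt W1 x by blast
      then show "A (\<tau> w) (\<tau> (w@[x])) = 1" using w wx gx by (simp add: \<tau>_def)
    qed
    have "u = pat \<sigma> \<tau>"
    proof
      fix h show "u h = pat \<sigma> \<tau> h" using gm by (simp add: u pat_def \<tau>_def)
    qed
    moreover have "\<sigma> \<in> Delta k K m" using \<sigma>W \<sigma>len by (simp add: Delta_def)
    ultimately show "u \<in> (\<Union>\<sigma>\<in>Delta k K m. pat \<sigma> ` VL (gmul K \<sigma> ` H))" using \<tau>V by blast
  qed
  have "card (accepted_patterns k K X H) \<le> card (\<Union>\<sigma>\<in>Delta k K m. pat \<sigma> ` VL (gmul K \<sigma> ` H))"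
    by (rule card_mono[OF _ sub]) (simp add: fH)
  also have "\<dots> \<le> (\<Sum>\<sigma>\<in>Delta k K m. card (pat \<sigma> ` VL (gmul K \<sigma> ` H)))"
    by (rule card_UN_le) simp
  also have "\<dots> \<le> (\<Sum>\<sigma>\<in>Delta k K m. card (VL (gmul K \<sigma> ` H)))"
    by (intro sum_mono card_image_le) (simp add: fH)
  finally show ?thesis .
qed

end


lemma sum_UN_le_nat:
  fixes f :: "'b \<Rightarrow> nat"
  assumes "finite I" "\<And>i. i \<in> I \<Longrightarrow> finite (B i)"
  shows "sum f (\<Union>i\<in>I. B i) \<le> (\<Sum>i\<in>I. sum f (B i))"
  using assms
proof (induction I rule: finite_induct)
  case empty thus ?case by simp
next
  case (insert x I)
  have "sum f (\<Union>i\<in>insert x I. B i) = sum f (B x \<union> (\<Union>i\<in>I. B i))" by simp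
  also have "\<dots> \<le> sum f (B x) + sum f (\<Union>i\<in>I. B i)"
    using insert by (simp add: sum_Un_nat)
  also have "\<dots> \<le> sum f (B x) + (\<Sum>i\<in>I. sum f (B i))" using insert by simp
  also have "\<dots> = (\<Sum>i\<in>insert x I. sum f (B i))" using insert by simp
  finally show ?case .
qed

context TS begin

definition nc :: "nat list \<Rightarrow> nat \<Rightarrow> bool" where "nc \<sigma> z \<longleftrightarrow> \<sigma> = [] \<or> K (last \<sigma>) z \<noteq> 0"

definition Rg :: "nat list \<Rightarrow> nat set \<Rightarrow> nat \<Rightarrow> nat list set" where
  "Rg \<sigma> Z d = {gmul K \<sigma> (z#q) | z q. z \<in> Z \<and> q \<in> fw z d}"

definition Znc :: "nat list \<Rightarrow> nat set \<Rightarrow> nat set" where "Znc \<sigma> Z = {z\<in>Z. nc \<sigma> z}"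
definition Zc :: "nat list \<Rightarrow> nat set \<Rightarrow> nat set" where "Zc \<sigma> Z = {z\<in>Z. \<not> nc \<sigma> z}"

lemma Rg_eq_image: "Rg \<sigma> Z d = (\<lambda>(z,q). gmul K \<sigma> (z#q)) ` (SIGMA z:Z. fw z d)"
  by (auto simp: Rg_def)

lemma finite_Rg[simp]: "finite Z \<Longrightarrow> finite (Rg \<sigma> Z d)"
  by (simp add: Rg_eq_image)

lemma Rg_decomp:
  assumes Z: "Z \<subseteq> {..<k}"
  shows "Rg \<sigma> Z d = (\<Union>z\<in>Znc \<sigma> Z. (\<lambda>q. \<sigma> @ z # q) ` fw z d) \<union>
     (if Zc \<sigma> Z = {} then {} else insert (butlast \<sigma>)
        (case d of 0 \<Rightarrow> {} | Suc d' \<Rightarrow> Rg (butlast \<sigma>) (\<Union>z\<in>Zc \<sigma> Z. Rs z) d'))"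
    (is "?L = ?R")
proof (intro set_eqI iffI)
  fix w assume "w \<in> ?L"
  then obtain z q where zq: "z \<in> Z" "q \<in> fw z d" and w: "w = gmul K \<sigma> (z#q)" by (auto simp: Rg_def)
  show "w \<in> ?R"
  proof (cases "nc \<sigma> z")
    case True
    then have "w = \<sigma> @ z # q" using w by (simp add: gmul_nc nc_def)
    then show ?thesis using zq True by (auto simp: Znc_def)
  next
    case False
    then have sne: "\<sigma> \<noteq> []" and K0: "K (last \<sigma>) z = 0" by (auto simp: nc_def)
    have w2: "w = gmul K (butlast \<sigma>) q" using w sne K0 by (simp add: gmul_cancel)
    have zc: "z \<in> Zc \<sigma> Z" using zq False by (simp add: Zc_def)
    show ?thesis
    proof (cases q)
      case Nil thus ?thesis using w2 zc by auto
    next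
      case (Cons x q')
      have mr: "is_min_rep k K (z # x # q')" "length (x#q') \<le> d" using zq Cons by (auto simp: fw_def)
      then obtain d' where d: "d = Suc d'" by (cases d) auto
      have "x < k" "K z x = 1" "is_min_rep k K (x#q')" using mr by (auto simp: is_min_rep_Cons)
      then have "x \<in> Rs z" "q' \<in> fw x d'" using mr d by (auto simp: Rs_def fw_def)
      then have "w \<in> Rg (butlast \<sigma>) (\<Union>z\<in>Zc \<sigma> Z. Rs z) d'" using w2 Cons zc by (auto simp: Rg_def)
      then show ?thesis using d zc by auto
    qed
  qed
next
  fix w assume w: "w \<in> ?R"
  show "w \<in> ?L"
  proof (cases "w \<in> (\<Union>z\<in>Znc \<sigma> Z. (\<lambda>q. \<sigma> @ z # q) ` fw z d)")
    case True
    then obtain z q where zq: "z \<in> Znc \<sigma> Z" "q \<in> fw z d" "w = \<sigma> @ z # q" by auto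
    then have "w = gmul K \<sigma> (z#q)" by (simp add: gmul_nc Znc_def nc_def)
    then show ?thesis using zq by (auto simp: Rg_def Znc_def)
  next
    case False
    then have zc: "Zc \<sigma> Z \<noteq> {}" and w': "w = butlast \<sigma> \<or> (\<exists>d'. d = Suc d' \<and> w \<in> Rg (butlast \<sigma>) (\<Union>z\<in>Zc \<sigma> Z. Rs z) d')"
      using w by (auto split: if_splits nat.splits)
    obtain z0 where z0: "z0 \<in> Zc \<sigma> Z" using zc by blast
    then have z0Z: "z0 \<in> Z" and sne: "\<sigma> \<noteq> []" and K0: "K (last \<sigma>) z0 = 0"
      by (auto simp: Zc_def nc_def)
    show ?thesis
    proof (cases "w = butlast \<sigma>")
      case True
      have "gmul K \<sigma> [z0] = butlast \<sigma>" using sne K0 by (simp add: gmul_cancel)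
      moreover have "[] \<in> fw z0 d" using z0Z Z by auto
      ultimately show ?thesis using True z0Z unfolding Rg_def by force
    next
      case False
      then obtain d' where d: "d = Suc d'" and wR: "w \<in> Rg (butlast \<sigma>) (\<Union>z\<in>Zc \<sigma> Z. Rs z) d'"
        using w' by blast
      then obtain z x q' where zx: "z \<in> Zc \<sigma> Z" "x \<in> Rs z" "q' \<in> fw x d'" "w = gmul K (butlast \<sigma>) (x#q')"
        by (auto simp: Rg_def)
      have zZ: "z \<in> Z" and sne: "\<sigma> \<noteq> []" and K0: "K (last \<sigma>) z = 0" using zx by (auto simp: Zc_def nc_def)
      have zk: "z < k" using zZ Z by auto
      have "x < k" "K z x = 1" using zx(2) K01' zk by (auto simp: Rs_def)
      then have "x # q' \<in> fw z d" using zx(3) d zk by (auto simp: fw_def is_min_rep_Cons)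
      moreover have "w = gmul K \<sigma> (z # x # q')" using zx sne K0 by (simp add: gmul_cancel)
      ultimately show ?thesis using zZ unfolding Rg_def by blast
    qed
  qed
qed

lemma card_VL_Un:
  assumes "finite S1" "finite S2"
  shows "card (VL (S1 \<union> S2)) \<le> card (VL S1) * card (VL S2)"
proof -
  let ?m = "\<lambda>\<tau>. (restrict \<tau> S1, restrict \<tau> S2)"
  have "?m ` VL (S1 \<union> S2) \<subseteq> VL S1 \<times> VL S2"
    by (auto simp: VL_def)
  moreover have "inj_on ?m (VL (S1 \<union> S2))"
  proof (rule inj_onI)
    fix t1 t2 assume t: "t1 \<in> VL (S1 \<union> S2)" "t2 \<in> VL (S1 \<union> S2)" and e: "?m t1 = ?m t2"
    show "t1 = t2"
    proof (rule VL_eqI[OF t])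
      fix q assume "q \<in> S1 \<union> S2"
      then show "t1 q = t2 q" using e by (metis Pair_inject Un_iff restrict_apply')
    qed
  qed
  ultimately have "card (VL (S1 \<union> S2)) \<le> card (VL S1 \<times> VL S2)"
    using assms by (intro card_inj_on_le) auto
  then show ?thesis by (simp add: card_cartesian_product)
qed

lemma card_VL_empty[simp]: "card (VL {}) = 1"
proof -
  have "VL {} = {\<lambda>_. undefined}" by (auto simp: VL_def)
  then show ?thesis by simp
qed

lemma card_VL_UN:
  assumes "finite I" "\<And>i. i \<in> I \<Longrightarrow> finite (S i)"
  shows "card (VL (\<Union>i\<in>I. S i)) \<le> (\<Prod>i\<in>I. card (VL (S i)))"
  using assms
proof (induction I rule: finite_induct)
  case empty thus ?case by simp
next
  case (insert x I)
  have "card (VL (\<Union>i\<in>insert x I. S i)) = card (VL (S x \<union> (\<Union>i\<in>I. S i)))" by simp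
  also have "\<dots> \<le> card (VL (S x)) * card (VL (\<Union>i\<in>I. S i))"
    using insert by (intro card_VL_Un) auto
  also have "\<dots> \<le> card (VL (S x)) * (\<Prod>i\<in>I. card (VL (S i)))"
    using insert by (intro mult_le_mono2) auto
  also have "\<dots> = (\<Prod>i\<in>insert x I. card (VL (S i)))" using insert by simp
  finally show ?case .
qed

lemma card_VL_single: "card (VL {w}) \<le> CARD('a)"
proof -
  have "card (VL {w}) \<le> card (PiE {w} (\<lambda>_. UNIV :: 'a set))"
    by (intro card_mono VL_sub) (simp add: finite_PiE)
  also have "\<dots> = CARD('a)" by (simp add: card_PiE)
  finally show ?thesis .
qed

lemma card_VL_branch:
  assumes z: "z < k"
  shows "card (VL ((\<lambda>q. \<sigma> @ z # q) ` fw z d)) \<le> (\<Sum>a\<in>UNIV. Fa z d a)"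
proof -
  let ?P = "(\<lambda>q. \<sigma> @ z # q) ` fw z d"
  let ?m = "\<lambda>\<tau>. (\<lambda>q. if q \<in> fw z d then \<tau> (\<sigma> @ z # q) else undefined)"
  have "?m ` VL ?P \<subseteq> VL (fw z d)"
  proof
    fix f assume "f \<in> ?m ` VL ?P"
    then obtain \<tau> where \<tau>: "\<tau> \<in> VL ?P" and f: "f = ?m \<tau>" by auto
    show "f \<in> VL (fw z d)" unfolding VL_def
    proof (intro CollectI conjI allI impI)
      fix w assume "w \<notin> fw z d" then show "f w = undefined" by (simp add: f)
    next
      fix w x assume w: "w \<in> fw z d" and wx: "w @ [x] \<in> fw z d"
      have m1: "\<sigma> @ z # w \<in> ?P" and m2: "(\<sigma> @ z # w) @ [x] \<in> ?P" using w wx by auto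
      have vv: "\<forall>w x. w \<in> ?P \<longrightarrow> w@[x] \<in> ?P \<longrightarrow> A (\<tau> w) (\<tau> (w@[x])) = 1"
        using \<tau> unfolding VL_def by blast
      have "A (\<tau> (\<sigma> @ z # w)) (\<tau> ((\<sigma> @ z # w) @ [x])) = 1" using vv m1 m2 by blast
      then show "A (f w) (f (w @ [x])) = 1" using w wx by (simp add: f)
    qed
  qed
  moreover have "inj_on ?m (VL ?P)"
  proof (rule inj_onI)
    fix t1 t2 assume t: "t1 \<in> VL ?P" "t2 \<in> VL ?P" and e: "?m t1 = ?m t2"
    show "t1 = t2"
    proof (rule VL_eqI[OF t])
      fix w assume "w \<in> ?P"
      then obtain q where q: "q \<in> fw z d" "w = \<sigma> @ z # q" by auto
      then show "t1 w = t2 w" using fun_cong[OF e, of q] by simp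
    qed
  qed
  ultimately have "card (VL ?P) \<le> card (VL (fw z d))"
    by (intro card_inj_on_le) auto
  also have "\<dots> = (\<Sum>a\<in>UNIV. Fa z d a)" using z by (simp add: card_VL_sum Fa_card)
  finally show ?thesis .
qed

fun Bd :: "nat list \<Rightarrow> nat set \<Rightarrow> nat \<Rightarrow> nat" where
  "Bd \<sigma> Z 0 = (\<Prod>z\<in>Znc \<sigma> Z. \<Sum>a\<in>UNIV. Fa z 0 a) * (if Zc \<sigma> Z = {} then 1 else CARD('a))"
| "Bd \<sigma> Z (Suc d) = (\<Prod>z\<in>Znc \<sigma> Z. \<Sum>a\<in>UNIV. Fa z (Suc d) a) *
     (if Zc \<sigma> Z = {} then 1 else CARD('a) * Bd (butlast \<sigma>) (\<Union>z\<in>Zc \<sigma> Z. Rs z) d)"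

lemma finite_Znc[simp]: "Z \<subseteq> {..<k} \<Longrightarrow> finite (Znc \<sigma> Z)"
  by (rule finite_subset[of _ "{..<k}"]) (auto simp: Znc_def)

lemma finite_Zc[simp]: "Z \<subseteq> {..<k} \<Longrightarrow> finite (Zc \<sigma> Z)"
  by (rule finite_subset[of _ "{..<k}"]) (auto simp: Zc_def)

lemma UZc_sub: "(\<Union>z\<in>Zc \<sigma> Z. Rs z) \<subseteq> {..<k}"
  using Rs_sub by blast

lemma VL_Rg_Bd: "Z \<subseteq> {..<k} \<Longrightarrow> card (VL (Rg \<sigma> Z d)) \<le> Bd \<sigma> Z d"
proof (induction d arbitrary: \<sigma> Z)
  case (0 \<sigma> Z)
  let ?P = "\<Union>z\<in>Znc \<sigma> Z. (\<lambda>q. \<sigma> @ z # q) ` fw z 0"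
  let ?Q = "if Zc \<sigma> Z = {} then {} else {butlast \<sigma>}"
  have fZ: "finite Z" using 0 finite_subset by blast
  have "Rg \<sigma> Z 0 = ?P \<union> ?Q" using Rg_decomp[OF 0, of \<sigma> 0] by simp
  then have "card (VL (Rg \<sigma> Z 0)) \<le> card (VL ?P) * card (VL ?Q)"
    using 0 by (simp only:) (intro card_VL_Un, auto)
  also have "\<dots> \<le> (\<Prod>z\<in>Znc \<sigma> Z. \<Sum>a\<in>UNIV. Fa z 0 a) * (if Zc \<sigma> Z = {} then 1 else CARD('a))"
  proof (intro mult_le_mono)
    have "card (VL ?P) \<le> (\<Prod>z\<in>Znc \<sigma> Z. card (VL ((\<lambda>q. \<sigma> @ z # q) ` fw z 0)))"
      using 0 by (intro card_VL_UN) auto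
    also have "\<dots> \<le> (\<Prod>z\<in>Znc \<sigma> Z. \<Sum>a\<in>UNIV. Fa z 0 a)"
      using 0 by (intro prod_mono conjI card_VL_branch) (auto simp: Znc_def)
    finally show "card (VL ?P) \<le> (\<Prod>z\<in>Znc \<sigma> Z. \<Sum>a\<in>UNIV. Fa z 0 a)" .
    show "card (VL ?Q) \<le> (if Zc \<sigma> Z = {} then 1 else CARD('a))"
      using card_VL_single by auto
  qed
  finally show ?case by simp
next
  case (Suc d \<sigma> Z)
  let ?P = "\<Union>z\<in>Znc \<sigma> Z. (\<lambda>q. \<sigma> @ z # q) ` fw z (Suc d)"
  let ?U = "\<Union>z\<in>Zc \<sigma> Z. Rs z"
  let ?Q = "if Zc \<sigma> Z = {} then {} else {butlast \<sigma>} \<union> Rg (butlast \<sigma>) ?U d"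
  have fU: "finite ?U" using UZc_sub finite_subset by blast
  have "Rg \<sigma> Z (Suc d) = ?P \<union> ?Q" using Rg_decomp[OF Suc.prems, of \<sigma> "Suc d"] by simp
  then have "card (VL (Rg \<sigma> Z (Suc d))) \<le> card (VL ?P) * card (VL ?Q)"
    using Suc.prems fU by (simp only:) (intro card_VL_Un, auto)
  also have "\<dots> \<le> (\<Prod>z\<in>Znc \<sigma> Z. \<Sum>a\<in>UNIV. Fa z (Suc d) a) *
     (if Zc \<sigma> Z = {} then 1 else CARD('a) * Bd (butlast \<sigma>) ?U d)"
  proof (intro mult_le_mono)
    have "card (VL ?P) \<le> (\<Prod>z\<in>Znc \<sigma> Z. card (VL ((\<lambda>q. \<sigma> @ z # q) ` fw z (Suc d))))"
      using Suc.prems by (intro card_VL_UN) auto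
    also have "\<dots> \<le> (\<Prod>z\<in>Znc \<sigma> Z. \<Sum>a\<in>UNIV. Fa z (Suc d) a)"
      using Suc.prems by (intro prod_mono conjI card_VL_branch) (auto simp: Znc_def)
    finally show "card (VL ?P) \<le> (\<Prod>z\<in>Znc \<sigma> Z. \<Sum>a\<in>UNIV. Fa z (Suc d) a)" .
    show "card (VL ?Q) \<le> (if Zc \<sigma> Z = {} then 1 else CARD('a) * Bd (butlast \<sigma>) ?U d)"
    proof (cases "Zc \<sigma> Z = {}")
      case True thus ?thesis by simp
    next
      case False
      have "card (VL ({butlast \<sigma>} \<union> Rg (butlast \<sigma>) ?U d)) \<le> card (VL {butlast \<sigma>}) * card (VL (Rg (butlast \<sigma>) ?U d))"
        using fU by (intro card_VL_Un) auto
      also have "\<dots> \<le> CARD('a) * Bd (butlast \<sigma>) ?U d"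
        by (intro mult_le_mono card_VL_single Suc.IH UZc_sub)
      finally show ?thesis using False by simp
    qed
  qed
  finally show ?case by simp
qed

lemma stem_ub:
  assumes i: "i < k"
  shows "p_stem k K X [i] n \<le> (\<Sum>\<sigma>\<in>Delta k K (Suc n). Bd \<sigma> {i} n)"
proof -
  let ?H = "Delta_bar k K [i] n"
  have H: "?H = (\<lambda>q. i#q) ` fw i n" using i by (simp add: Delta_bar_eq)
  have "p_stem k K X [i] n \<le> (\<Sum>\<sigma>\<in>Delta k K (Suc n). card (VL (gmul K \<sigma> ` ?H)))"
    unfolding p_stem_def
  proof (rule patterns_ub)
    show "?H \<subseteq> W" unfolding H by (auto simp: fw_def semigrp_iff)
    show "finite ?H" unfolding H by simp
    show "\<And>h. h \<in> ?H \<Longrightarrow> length h \<le> Suc n" unfolding H by (auto simp: fw_def)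
  qed
  also have "\<dots> \<le> (\<Sum>\<sigma>\<in>Delta k K (Suc n). Bd \<sigma> {i} n)"
  proof (intro sum_mono)
    fix \<sigma>
    have "gmul K \<sigma> ` ?H = Rg \<sigma> {i} n" unfolding H Rg_def by auto
    then show "card (VL (gmul K \<sigma> ` ?H)) \<le> Bd \<sigma> {i} n" using VL_Rg_Bd[of "{i}" \<sigma> n] i by simp
  qed
  finally show ?thesis .
qed

lemma count_ub:
  "p_count k K X (Suc n) \<le> (\<Sum>\<sigma>\<in>Delta k K (Suc n). CARD('a) * Bd \<sigma> {..<k} n)"
proof -
  let ?H = "Delta k K (Suc n)"
  have "p_count k K X (Suc n) \<le> (\<Sum>\<sigma>\<in>Delta k K (Suc n). card (VL (gmul K \<sigma> ` ?H)))"
    unfolding p_count_def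
    by (rule patterns_ub[OF _ finite_Delta]) (auto simp: Delta_def)
  also have "\<dots> \<le> (\<Sum>\<sigma>\<in>Delta k K (Suc n). CARD('a) * Bd \<sigma> {..<k} n)"
  proof (intro sum_mono)
    fix \<sigma>
    have "gmul K \<sigma> ` ?H = {\<sigma>} \<union> Rg \<sigma> {..<k} n" unfolding Delta_Suc tree_def Rg_def by auto
    moreover have "card (VL ({\<sigma>} \<union> Rg \<sigma> {..<k} n)) \<le> card (VL {\<sigma>}) * card (VL (Rg \<sigma> {..<k} n))"
      by (intro card_VL_Un) auto
    moreover have "card (VL {\<sigma>}) * card (VL (Rg \<sigma> {..<k} n)) \<le> CARD('a) * Bd \<sigma> {..<k} n"
      by (intro mult_le_mono card_VL_single VL_Rg_Bd) simp
    ultimately show "card (VL (gmul K \<sigma> ` ?H)) \<le> CARD('a) * Bd \<sigma> {..<k} n" by simp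
  qed
  finally show ?thesis .
qed

lemma Bd_nocancel:
  assumes all: "\<forall>i<k. \<forall>j<k. K i j \<noteq> 0" and \<sigma>: "\<sigma> \<in> W" and Z: "Z \<subseteq> {..<k}"
  shows "Bd \<sigma> Z d = (\<Prod>z\<in>Z. \<Sum>a\<in>UNIV. Fa z d a)"
proof -
  have "nc \<sigma> z" if "z \<in> Z" for z
  proof (cases "\<sigma> = []")
    case False
    then have l: "last \<sigma> < k" using \<sigma> by (auto simp: semigrp_iff intro: is_min_rep_lt)
    have "z < k" using that Z by auto
    then have "K (last \<sigma>) z \<noteq> 0" using all l by blast
    then show ?thesis by (simp add: nc_def)
  qed (simp add: nc_def)
  then have "Znc \<sigma> Z = Z" "Zc \<sigma> Z = {}" by (auto simp: Znc_def Zc_def)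
  then show ?thesis by (cases d) simp_all
qed

lemma Bd_S:
  assumes Z: "Z \<subseteq> {..<k}"
  shows "(\<Sum>z\<in>Z. card (fw z d)) = (\<Sum>z\<in>Znc \<sigma> Z. card (fw z d)) + (\<Sum>z\<in>Zc \<sigma> Z. card (fw z d))"
    and "card (Znc \<sigma> Z) \<le> card Z"
proof -
  have fZ: "finite Z" using Z finite_subset by blast
  have "Z = Znc \<sigma> Z \<union> Zc \<sigma> Z" "Znc \<sigma> Z \<inter> Zc \<sigma> Z = {}" by (auto simp: Znc_def Zc_def)
  then show "(\<Sum>z\<in>Z. card (fw z d)) = (\<Sum>z\<in>Znc \<sigma> Z. card (fw z d)) + (\<Sum>z\<in>Zc \<sigma> Z. card (fw z d))"
    using Z by (metis finite_Zc finite_Znc sum.union_disjoint)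
  show "card (Znc \<sigma> Z) \<le> card Z" using fZ by (intro card_mono) (auto simp: Znc_def)
qed

lemma Bd_P:
  fixes c c1 :: real
  assumes F: "\<And>z d. z < k \<Longrightarrow> real (\<Sum>a\<in>UNIV. Fa z d a) \<le> exp (c * real (card (fw z d)) + c1)"
    and Z: "Z \<subseteq> {..<k}"
  shows "real (\<Prod>z\<in>Znc \<sigma> Z. \<Sum>a\<in>UNIV. Fa z d a) \<le> exp (c * real (\<Sum>z\<in>Znc \<sigma> Z. card (fw z d)) + real (card (Znc \<sigma> Z)) * c1)"
proof -
  have "real (\<Prod>z\<in>Znc \<sigma> Z. \<Sum>a\<in>UNIV. Fa z d a) = (\<Prod>z\<in>Znc \<sigma> Z. real (\<Sum>a\<in>UNIV. Fa z d a))" by simp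
  also have "\<dots> \<le> (\<Prod>z\<in>Znc \<sigma> Z. exp (c * real (card (fw z d)) + c1))"
    using Z by (intro prod_mono conjI F) (auto simp: Znc_def intro: sum_nonneg)
  also have "\<dots> = exp (\<Sum>z\<in>Znc \<sigma> Z. c * real (card (fw z d)) + c1)"
    using Z by (simp add: exp_sum)
  also have "(\<Sum>z\<in>Znc \<sigma> Z. c * real (card (fw z d)) + c1) = c * real (\<Sum>z\<in>Znc \<sigma> Z. card (fw z d)) + real (card (Znc \<sigma> Z)) * c1"
    by (simp add: sum.distrib sum_distrib_left)
  finally show ?thesis .
qed

lemma Bd_bound:
  fixes c c1 c2 :: real
  assumes c: "c \<ge> 0" and c1: "c1 \<ge> 0" and c2: "c2 = ln (real CARD('a)) + real k * c1"
    and F: "\<And>z d. z < k \<Longrightarrow> real (\<Sum>a\<in>UNIV. Fa z d a) \<le> exp (c * real (card (fw z d)) + c1)"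
  shows "Z \<subseteq> {..<k} \<Longrightarrow> real (Bd \<sigma> Z d) \<le> exp (c * real (\<Sum>z\<in>Z. card (fw z d)) + real (card Z) * c1 + real (d+1) * c2)"
proof (induction d arbitrary: \<sigma> Z)
  have lnC: "ln (real CARD('a)) \<ge> 0" by simp
  have c2ge: "c2 \<ge> ln (real CARD('a))" using c2 c1 by simp
  case (0 \<sigma> Z)
  have "real (Bd \<sigma> Z 0) \<le> exp (c * real (\<Sum>z\<in>Znc \<sigma> Z. card (fw z 0)) + real (card (Znc \<sigma> Z)) * c1) * exp (ln (real CARD('a)))"
  proof -
    have "real (Bd \<sigma> Z 0) = real (\<Prod>z\<in>Znc \<sigma> Z. \<Sum>a\<in>UNIV. Fa z 0 a) * real (if Zc \<sigma> Z = {} then 1 else CARD('a))"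
      by simp
    also have "\<dots> \<le> exp (c * real (\<Sum>z\<in>Znc \<sigma> Z. card (fw z 0)) + real (card (Znc \<sigma> Z)) * c1) * exp (ln (real CARD('a)))"
      by (intro mult_mono Bd_P[OF F 0]) auto
    finally show ?thesis .
  qed
  also have "\<dots> = exp (c * real (\<Sum>z\<in>Znc \<sigma> Z. card (fw z 0)) + real (card (Znc \<sigma> Z)) * c1 + ln (real CARD('a)))"
    by (simp add: exp_add)
  also have "\<dots> \<le> exp (c * real (\<Sum>z\<in>Z. card (fw z 0)) + real (card Z) * c1 + real (0+1) * c2)"
  proof (intro exp_mono add_mono)
    show "c * real (\<Sum>z\<in>Znc \<sigma> Z. card (fw z 0)) \<le> c * real (\<Sum>z\<in>Z. card (fw z 0))"
      using Bd_S(1)[OF 0, of 0 \<sigma>] c by (intro mult_left_mono) (auto intro: sum_nonneg)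
    show "real (card (Znc \<sigma> Z)) * c1 \<le> real (card Z) * c1" using Bd_S(2)[OF 0, of \<sigma>] c1
      by (intro mult_right_mono) auto
    show "ln (real CARD('a)) \<le> real (0 + 1) * c2" using c2ge by simp
  qed
  finally show ?case .
next
  have lnC: "ln (real CARD('a)) \<ge> 0" by simp
  have c2ge: "c2 \<ge> ln (real CARD('a))" using c2 c1 by simp
  case (Suc d \<sigma> Z)
  let ?U = "\<Union>z\<in>Zc \<sigma> Z. Rs z"
  let ?E1 = "c * real (\<Sum>z\<in>Znc \<sigma> Z. card (fw z (Suc d))) + real (card (Znc \<sigma> Z)) * c1"
  let ?E2 = "c * real (\<Sum>z\<in>?U. card (fw z d)) + real (card ?U) * c1 + real (d+1) * c2"
  have S1: "(\<Sum>z\<in>Z. card (fw z (Suc d))) = (\<Sum>z\<in>Znc \<sigma> Z. card (fw z (Suc d))) + (\<Sum>z\<in>Zc \<sigma> Z. card (fw z (Suc d)))"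
    by (rule Bd_S(1)[OF Suc.prems])
  have S2: "card (Znc \<sigma> Z) \<le> card Z" by (rule Bd_S(2)[OF Suc.prems])
  have P: "real (\<Prod>z\<in>Znc \<sigma> Z. \<Sum>a\<in>UNIV. Fa z (Suc d) a) \<le> exp ?E1" by (rule Bd_P[OF F Suc.prems])
  show ?case
  proof (cases "Zc \<sigma> Z = {}")
    case True
    have "real (Bd \<sigma> Z (Suc d)) \<le> exp ?E1" using True P by simp
    also have "\<dots> \<le> exp (c * real (\<Sum>z\<in>Z. card (fw z (Suc d))) + real (card Z) * c1 + real (Suc d + 1) * c2)"
    proof (intro exp_mono)
      have "c * real (\<Sum>z\<in>Znc \<sigma> Z. card (fw z (Suc d))) \<le> c * real (\<Sum>z\<in>Z. card (fw z (Suc d)))"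
        using S1 c by (intro mult_left_mono) (auto intro: sum_nonneg)
      moreover have "real (card (Znc \<sigma> Z)) * c1 \<le> real (card Z) * c1" using S2 c1
        by (intro mult_right_mono) auto
      moreover have "0 \<le> real (Suc d + 1) * c2"
        using c2ge lnC by (intro mult_nonneg_nonneg) linarith+
      ultimately show "?E1 \<le> c * real (\<Sum>z\<in>Z. card (fw z (Suc d))) + real (card Z) * c1 + real (Suc d + 1) * c2"
        by linarith
    qed
    finally show ?thesis .
  next
    case False
    have IH: "real (Bd (butlast \<sigma>) ?U d) \<le> exp ?E2" by (rule Suc.IH[OF UZc_sub])
    have "real (Bd \<sigma> Z (Suc d)) = real (\<Prod>z\<in>Znc \<sigma> Z. \<Sum>a\<in>UNIV. Fa z (Suc d) a) * real CARD('a) * real (Bd (butlast \<sigma>) ?U d)"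
      using False by simp
    also have "\<dots> \<le> exp ?E1 * exp (ln (real CARD('a))) * exp ?E2"
      by (intro mult_mono P IH) auto
    also have "\<dots> = exp (?E1 + ln (real CARD('a)) + ?E2)" by (simp add: exp_add)
    also have "\<dots> \<le> exp (c * real (\<Sum>z\<in>Z. card (fw z (Suc d))) + real (card Z) * c1 + real (Suc d + 1) * c2)"
    proof (intro exp_mono)
      have fZc: "finite (Zc \<sigma> Z)" using Suc.prems by simp
      have "(\<Sum>z\<in>?U. card (fw z d)) \<le> (\<Sum>z\<in>Zc \<sigma> Z. \<Sum>x\<in>Rs z. card (fw x d))"
        using fZc by (intro sum_UN_le_nat) auto
      also have "\<dots> \<le> (\<Sum>z\<in>Zc \<sigma> Z. card (fw z (Suc d)))"
      proof (intro sum_mono)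
        fix z assume "z \<in> Zc \<sigma> Z"
        then have "z < k" using Suc.prems by (auto simp: Zc_def)
        then show "(\<Sum>x\<in>Rs z. card (fw x d)) \<le> card (fw z (Suc d))" by (simp add: card_fw_Suc)
      qed
      finally have U1: "(\<Sum>z\<in>?U. card (fw z d)) \<le> (\<Sum>z\<in>Zc \<sigma> Z. card (fw z (Suc d)))" .
      have U2: "card ?U \<le> k" using card_mono[OF _ UZc_sub, of \<sigma> Z] by simp
      have e1: "c * real (\<Sum>z\<in>Znc \<sigma> Z. card (fw z (Suc d))) + c * real (\<Sum>z\<in>?U. card (fw z d))
          \<le> c * real (\<Sum>z\<in>Z. card (fw z (Suc d)))"
      proof -
        have "real (\<Sum>z\<in>Znc \<sigma> Z. card (fw z (Suc d))) + real (\<Sum>z\<in>?U. card (fw z d)) \<le> real (\<Sum>z\<in>Z. card (fw z (Suc d)))"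
          using U1 S1 by linarith
        then show ?thesis using c by (metis distrib_left mult_left_mono)
      qed
      have e2: "real (card (Znc \<sigma> Z)) * c1 \<le> real (card Z) * c1"
        using S2 c1 by (intro mult_right_mono) auto
      have e3: "real (card ?U) * c1 \<le> real k * c1" using U2 c1 by (intro mult_right_mono) auto
      show "?E1 + ln (real CARD('a)) + ?E2 \<le> c * real (\<Sum>z\<in>Z. card (fw z (Suc d))) + real (card Z) * c1 + real (Suc d + 1) * c2"
        using e1 e2 e3 c2 by (simp add: algebra_simps)
    qed
    finally show ?thesis .
  qed
qed

end


lemma prim_mono:
  assumes "primitive_on I M" "finite I"
  shows "\<exists>p>0. \<forall>m\<ge>p. \<forall>i\<in>I. \<forall>j\<in>I. mpow I M m i j > 0"
proof -
  obtain p where p: "p > 0" "\<forall>i\<in>I. \<forall>j\<in>I. mpow I M p i j > 0"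
    using assms(1) unfolding primitive_on_def by blast
  have "\<forall>i\<in>I. \<forall>j\<in>I. mpow I M m i j > 0" if "m \<ge> p" for m
    using that
  proof (induction m rule: dec_induct)
    case base thus ?case using p by blast
  next
    case (step m)
    show ?case
    proof (intro ballI)
      fix i j assume ij: "i \<in> I" "j \<in> I"
      obtain l where l: "l \<in> I" "M i l \<noteq> 0" using prim_row[OF assms(1,2) ij(1)] by blast
      have "0 < M i l * mpow I M m l j" using l step.IH ij by simp
      also have "\<dots> \<le> (\<Sum>l\<in>I. M i l * mpow I M m l j)"
        by (rule member_le_sum) (use l assms(2) in auto)
      also have "\<dots> = mpow I M (Suc m) i j" using mpow_Suc_left[OF assms(2) ij] by simp
      finally show "mpow I M (Suc m) i j > 0" .
    qed
  qed
  then show ?thesis using p(1) by blast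
qed

lemma mpow_pos_Suc_left:
  assumes "finite I" "i \<in> I" "j \<in> I" "mpow I M (Suc m) i j > 0"
  shows "\<exists>l\<in>I. M i l > 0 \<and> mpow I M m l j > 0"
proof (rule ccontr)
  assume "\<not> ?thesis"
  then have z: "\<forall>l\<in>I. M i l * mpow I M m l j = 0" by auto
  have "(\<Sum>l\<in>I. M i l * mpow I M m l j) = 0" by (rule sum.neutral) (use z in auto)
  then have "mpow I M (Suc m) i j = 0" using mpow_Suc_left[OF assms(1-3), of M m] by simp
  then show False using assms(4) by simp
qed

context TS begin

definition ee :: "nat \<Rightarrow> nat \<Rightarrow> real" where "ee i n = real (card (fw i n)) - 1"
definition lf :: "nat \<Rightarrow> nat \<Rightarrow> 'a \<Rightarrow> real" where "lf i n a = ln (real (Fa i n a))"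

lemma ee_0: "i < k \<Longrightarrow> ee i 0 = 0" by (simp add: ee_def fw_0)

lemma ee_Suc: "i < k \<Longrightarrow> ee i (Suc n) = (\<Sum>j\<in>Rs i. ee j n + 1)"
  by (simp add: ee_def card_fw_Suc)

lemma ee_ge: "i < k \<Longrightarrow> ee i n \<ge> real n"
proof (induction n arbitrary: i)
  case 0 thus ?case by (simp add: ee_0)
next
  case (Suc n)
  obtain j where j: "j \<in> Rs i" using Rs_ne[OF Suc.prems] by blast
  then have jk: "j < k" by (simp add: Rs_def)
  have "real (Suc n) \<le> ee j n + 1" using Suc.IH[OF jk] by simp
  also have "\<dots> \<le> (\<Sum>j\<in>Rs i. ee j n + 1)"
  proof (rule member_le_sum[OF j])
    fix x assume "x \<in> Rs i - {j}"
    then have "x < k" by (simp add: Rs_def)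
    then show "0 \<le> ee x n + 1" using Suc.IH by (smt (verit) of_nat_0_le_iff)
  qed simp
  finally show ?case using Suc.prems by (simp add: ee_Suc)
qed

lemma ee_nonneg: "i < k \<Longrightarrow> ee i n \<ge> 0"
  using ee_ge[of i n] by simp

lemma ee_mono: "i < k \<Longrightarrow> m \<le> n \<Longrightarrow> ee i m \<le> ee i n"
proof -
  assume "m \<le> n"
  then have "fw i m \<subseteq> fw i n" by (auto simp: fw_def)
  then have "card (fw i m) \<le> card (fw i n)" by (intro card_mono) auto
  then show ?thesis by (simp add: ee_def)
qed

lemma Fa_ge1: "i < k \<Longrightarrow> 1 \<le> Fa i n a"
proof (induction n arbitrary: i a)
  case 0 thus ?case by simp
next
  case (Suc n)
  have "1 \<le> (\<Sum>b\<in>UNIV. A a b * Fa j n b)" if j: "j \<in> Rs i" for j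
  proof -
    obtain b where b: "A a b = 1" using A_row by blast
    have "1 \<le> A a b * Fa j n b" using b Suc.IH j by (simp add: Rs_def)
    also have "\<dots> \<le> (\<Sum>b\<in>UNIV. A a b * Fa j n b)" by (rule member_le_sum) auto
    finally show ?thesis .
  qed
  then have "(\<Prod>j\<in>Rs i. 1) \<le> (\<Prod>j\<in>Rs i. \<Sum>b\<in>UNIV. A a b * Fa j n b)"
    by (intro prod_mono) auto
  then show ?case by simp
qed

lemma Fa_pos: "i < k \<Longrightarrow> 0 < real (Fa i n a)"
  using Fa_ge1[of i n a] by simp

lemma lf_nonneg: "i < k \<Longrightarrow> 0 \<le> lf i n a"
  using Fa_ge1[of i n a] by (simp add: lf_def)

lemma Fa_exp_lf: "i < k \<Longrightarrow> real (Fa i n a) = exp (lf i n a)"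
  using Fa_pos[of i n a] by (simp add: lf_def)

lemma A_le1: "A a b \<le> 1"
proof -
  have "A a b \<in> {0,1}" using A01 unfolding zero_one_on_def by blast
  then show ?thesis by auto
qed

lemma Fa_le: "i < k \<Longrightarrow> real (Fa i n a) \<le> exp (ee i n * ln (real CARD('a)))"
proof (induction n arbitrary: i a)
  case 0 thus ?case by (simp add: ee_0)
next
  case (Suc n)
  let ?C = "real CARD('a)"
  have C: "?C > 0" by simp
  have "real (Fa i (Suc n) a) = (\<Prod>j\<in>Rs i. \<Sum>b\<in>UNIV. real (A a b) * real (Fa j n b))" by simp
  also have "\<dots> \<le> (\<Prod>j\<in>Rs i. exp ((ee j n + 1) * ln ?C))"
  proof (intro prod_mono conjI)
    fix j assume j: "j \<in> Rs i"
    then have jk: "j < k" by (simp add: Rs_def)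
    show "0 \<le> (\<Sum>b\<in>UNIV. real (A a b) * real (Fa j n b))" by (intro sum_nonneg) simp
    have "(\<Sum>b\<in>UNIV. real (A a b) * real (Fa j n b)) \<le> (\<Sum>b\<in>(UNIV::'a set). exp (ee j n * ln ?C))"
    proof (intro sum_mono)
      fix b
      have "real (A a b) * real (Fa j n b) \<le> 1 * real (Fa j n b)"
        using A_le1[of a b] by (intro mult_right_mono) auto
      also have "\<dots> \<le> exp (ee j n * ln ?C)" using Suc.IH[OF jk] by simp
      finally show "real (A a b) * real (Fa j n b) \<le> exp (ee j n * ln ?C)" .
    qed
    also have "\<dots> = ?C * exp (ee j n * ln ?C)" by simp
    also have "\<dots> = exp ((ee j n + 1) * ln ?C)" using C by (simp add: distrib_right exp_add)
    finally show "(\<Sum>b\<in>UNIV. real (A a b) * real (Fa j n b)) \<le> exp ((ee j n + 1) * ln ?C)" .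
  qed
  also have "\<dots> = exp ((\<Sum>j\<in>Rs i. ee j n + 1) * ln ?C)" by (simp add: exp_sum sum_distrib_right)
  finally show ?case using Suc.prems by (simp add: ee_Suc)
qed

lemma lf_le: "i < k \<Longrightarrow> lf i n a \<le> ee i n * ln (real CARD('a))"
proof -
  assume i: "i < k"
  have "ln (real (Fa i n a)) \<le> ln (exp (ee i n * ln (real CARD('a))))"
    using Fa_le[OF i, of n a] Fa_pos[OF i, of n a] by (subst ln_le_cancel_iff) auto
  then show ?thesis by (simp add: lf_def)
qed

lemma ee_Suc_diff:
  assumes "i < k"
  shows "ee i (Suc m + n) - ee i (Suc m) = (\<Sum>j\<in>Rs i. ee j (m + n) - ee j m)"
proof -
  have "ee i (Suc m + n) - ee i (Suc m) = (\<Sum>j\<in>Rs i. ee j (m + n) + 1) - (\<Sum>j\<in>Rs i. ee j m + 1)"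
    using assms by (simp add: ee_Suc)
  also have "\<dots> = (\<Sum>j\<in>Rs i. (ee j (m + n) + 1) - (ee j m + 1))" by (simp only: sum_subtractf)
  finally show ?thesis by simp
qed

lemma prod_exp_D:
  assumes "i < k"
  shows "(\<Prod>j\<in>Rs i. exp (c * (ee j (m + n) - ee j m))) = exp (c * (ee i (Suc m + n) - ee i (Suc m)))"
proof -
  have "(\<Prod>j\<in>Rs i. exp (c * (ee j (m + n) - ee j m))) = exp (\<Sum>j\<in>Rs i. c * (ee j (m + n) - ee j m))"
    by (simp add: exp_sum)
  also have "(\<Sum>j\<in>Rs i. c * (ee j (m + n) - ee j m)) = c * (ee i (Suc m + n) - ee i (Suc m))"
    using ee_Suc_diff[OF assms, of m n] by (simp add: sum_distrib_left)
  finally show ?thesis .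
qed

lemma U1:
  assumes hyp: "\<And>l b. l < k \<Longrightarrow> real (Fa l n b) \<le> exp (c * ee l n)"
  shows "i < k \<Longrightarrow> real (Fa i (m + n) a) \<le> real (Fa i m a) * exp (c * (ee i (m + n) - ee i m))"
proof (induction m arbitrary: i a)
  case 0 thus ?case using hyp by (simp add: ee_0)
next
  case (Suc m)
  let ?D = "\<lambda>j. ee j (m + n) - ee j m"
  let ?S = "\<lambda>j. \<Sum>b\<in>UNIV. real (A a b) * real (Fa j m b)"
  have "real (Fa i (Suc m + n) a) = (\<Prod>j\<in>Rs i. \<Sum>b\<in>UNIV. real (A a b) * real (Fa j (m + n) b))" by simp
  also have "\<dots> \<le> (\<Prod>j\<in>Rs i. \<Sum>b\<in>UNIV. real (A a b) * (real (Fa j m b) * exp (c * ?D j)))"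
  proof (intro prod_mono conjI sum_mono sum_nonneg mult_left_mono)
    fix j b assume j: "j \<in> Rs i"
    then show "real (Fa j (m + n) b) \<le> real (Fa j m b) * exp (c * ?D j)" using Suc.IH by (simp add: Rs_def)
  qed auto
  also have "\<dots> = (\<Prod>j\<in>Rs i. ?S j * exp (c * ?D j))"
    by (intro prod.cong refl) (simp add: sum_distrib_right mult.assoc)
  also have "\<dots> = (\<Prod>j\<in>Rs i. ?S j) * (\<Prod>j\<in>Rs i. exp (c * ?D j))"
    by (rule prod.distrib)
  also have "\<dots> = real (Fa i (Suc m) a) * exp (c * (ee i (Suc m + n) - ee i (Suc m)))"
    using prod_exp_D[OF Suc.prems, of c m n] by simp
  finally show ?case .
qed

lemma L1:
  assumes hyp: "\<And>l b. l < k \<Longrightarrow> exp (c * ee l n) \<le> real (Fa l n b)"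
  shows "i < k \<Longrightarrow> real (Fa i m a) * exp (c * (ee i (m + n) - ee i m)) \<le> real (Fa i (m + n) a)"
proof (induction m arbitrary: i a)
  case 0 thus ?case using hyp by (simp add: ee_0)
next
  case (Suc m)
  let ?D = "\<lambda>j. ee j (m + n) - ee j m"
  let ?S = "\<lambda>j. \<Sum>b\<in>UNIV. real (A a b) * real (Fa j m b)"
  have "real (Fa i (Suc m) a) * exp (c * (ee i (Suc m + n) - ee i (Suc m)))
      = (\<Prod>j\<in>Rs i. ?S j) * (\<Prod>j\<in>Rs i. exp (c * ?D j))"
    using prod_exp_D[OF Suc.prems, of c m n] by simp
  also have "\<dots> = (\<Prod>j\<in>Rs i. ?S j * exp (c * ?D j))"
    by (rule prod.distrib[symmetric])
  also have "\<dots> = (\<Prod>j\<in>Rs i. \<Sum>b\<in>UNIV. real (A a b) * (real (Fa j m b) * exp (c * ?D j)))"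
    by (intro prod.cong refl) (simp add: sum_distrib_right mult.assoc)
  also have "\<dots> \<le> (\<Prod>j\<in>Rs i. \<Sum>b\<in>UNIV. real (A a b) * real (Fa j (m + n) b))"
  proof (intro prod_mono conjI sum_mono sum_nonneg mult_left_mono)
    fix j b assume j: "j \<in> Rs i"
    then show "real (Fa j m b) * exp (c * ?D j) \<le> real (Fa j (m + n) b)" using Suc.IH by (simp add: Rs_def)
  qed auto
  also have "\<dots> = real (Fa i (Suc m + n) a)" by simp
  finally show ?case .
qed

end


context TS begin

lemma M1:
  assumes hyp: "\<And>l b. l < k \<Longrightarrow> exp (c * ee l n) \<le> real (Fa l n b)" and j0: "j0 < k"
  shows "i < k \<Longrightarrow> mpow {..<k} K r i j0 > 0 \<Longrightarrow> mpow UNIV A r a b0 > 0 \<Longrightarrow>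
    real (Fa j0 n b0) * exp (c * (ee i (r + n) - ee i r - ee j0 n)) \<le> real (Fa i (r + n) a)"
proof (induction r arbitrary: i a)
  case 0
  then have "i = j0" "a = b0" by (auto split: if_splits)
  then show ?case by (simp add: ee_0 j0)
next
  case (Suc r)
  obtain i1 where i1: "i1 \<in> {..<k}" "K i i1 > 0" "mpow {..<k} K r i1 j0 > 0"
    using mpow_pos_Suc_left[of "{..<k}" i j0 K r] Suc.prems j0 by auto
  obtain a1 where a1: "A a a1 > 0" "mpow UNIV A r a1 b0 > 0"
    using mpow_pos_Suc_left[of UNIV a b0 A r] Suc.prems by auto
  have i1k: "i1 < k" using i1 by simp
  have i1R: "i1 \<in> Rs i" using i1 by (simp add: Rs_def)
  let ?S = "\<lambda>j. \<Sum>b\<in>UNIV. real (A a b) * real (Fa j (r + n) b)"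
  let ?D = "\<lambda>j. ee j (r + n) - ee j r"
  have S1: "real (Fa j0 n b0) * exp (c * (?D i1 - ee j0 n)) \<le> ?S i1"
  proof -
    have "real (Fa j0 n b0) * exp (c * (?D i1 - ee j0 n)) \<le> real (Fa i1 (r + n) a1)"
      using Suc.IH[OF i1k i1(3) a1(2)] by (simp add: algebra_simps)
    also have "\<dots> = 1 * real (Fa i1 (r + n) a1)" by simp
    also have "\<dots> \<le> real (A a a1) * real (Fa i1 (r + n) a1)"
      using a1(1) by (intro mult_right_mono) auto
    also have "\<dots> \<le> ?S i1" by (rule member_le_sum) auto
    finally show ?thesis .
  qed
  have S2: "exp (c * ?D j) \<le> ?S j" if j: "j \<in> Rs i" for j
  proof -
    have jk: "j < k" using j by (simp add: Rs_def)
    obtain b where b: "A a b = 1" using A_row by blast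
    have "exp (c * ?D j) \<le> real (Fa j r b) * exp (c * ?D j)" using Fa_ge1[OF jk, of r b] by simp
    also have "\<dots> \<le> real (Fa j (r + n) b)" by (rule L1[OF hyp jk])
    also have "\<dots> = real (A a b) * real (Fa j (r + n) b)" using b by simp
    also have "\<dots> \<le> ?S j" by (rule member_le_sum) auto
    finally show ?thesis .
  qed
  have eq: "c * (ee i (Suc r + n) - ee i (Suc r) - ee j0 n) = c * (?D i1 - ee j0 n) + (\<Sum>j\<in>Rs i - {i1}. c * ?D j)"
  proof -
    define T where "T = (\<Sum>j\<in>Rs i - {i1}. ?D j)"
    have h: "ee i (Suc r + n) - ee i (Suc r) = ?D i1 + T"
      using ee_Suc_diff[OF Suc.prems(1), of r n] sum.remove[OF finite_Rs i1R, of ?D] by (simp add: T_def)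
    have "ee i (Suc r + n) - ee i (Suc r) - ee j0 n = (?D i1 - ee j0 n) + T" using h by linarith
    then have "c * (ee i (Suc r + n) - ee i (Suc r) - ee j0 n) = c * (?D i1 - ee j0 n) + c * T"
      by (metis distrib_left)
    also have "c * T = (\<Sum>j\<in>Rs i - {i1}. c * ?D j)" by (simp add: T_def sum_distrib_left)
    finally show ?thesis .
  qed
  have "real (Fa j0 n b0) * exp (c * (ee i (Suc r + n) - ee i (Suc r) - ee j0 n))
     = real (Fa j0 n b0) * exp (c * (?D i1 - ee j0 n)) * (\<Prod>j\<in>Rs i - {i1}. exp (c * ?D j))"
    unfolding eq by (simp add: exp_add exp_sum mult.assoc)
  also have "\<dots> \<le> ?S i1 * (\<Prod>j\<in>Rs i - {i1}. ?S j)"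
    by (intro mult_mono S1 prod_mono conjI S2) (auto intro: sum_nonneg prod_nonneg)
  also have "\<dots> = (\<Prod>j\<in>Rs i. ?S j)" using prod.remove[OF finite_Rs i1R, of ?S] by simp
  also have "\<dots> = real (Fa i (Suc r + n) a)" by simp
  finally show ?case .
qed

lemma ee_path: "l < k \<Longrightarrow> j < k \<Longrightarrow> mpow {..<k} K r l j > 0 \<Longrightarrow> ee j m \<le> ee l (r + m)"
proof (induction r arbitrary: l)
  case 0 thus ?case by (auto split: if_splits)
next
  case (Suc r)
  obtain l1 where l1: "l1 \<in> {..<k}" "K l l1 > 0" "mpow {..<k} K r l1 j > 0"
    using mpow_pos_Suc_left[of "{..<k}" l j K r] Suc.prems by auto
  have l1R: "l1 \<in> Rs l" using l1 by (simp add: Rs_def)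
  have "ee j m \<le> ee l1 (r + m)" using Suc.IH[of l1] l1 Suc.prems by simp
  also have "\<dots> \<le> ee l1 (r + m) + 1" by simp
  also have "\<dots> \<le> (\<Sum>j\<in>Rs l. ee j (r + m) + 1)"
  proof (rule member_le_sum[OF l1R])
    fix x assume "x \<in> Rs l - {l1}"
    then have "x < k" by (simp add: Rs_def)
    then show "0 \<le> ee x (r + m) + 1" using ee_nonneg[of x "r + m"] by simp
  qed simp
  also have "\<dots> = ee l (Suc r + m)" using Suc.prems by (simp add: ee_Suc)
  finally show ?case .
qed

lemma card_Rs_le: "card (Rs i) \<le> k"
  using card_mono[OF _ Rs_sub] by simp

lemma ee_growth:
  assumes m: "m \<ge> 1" and B: "\<And>j. j < k \<Longrightarrow> ee j m \<le> B"
  shows "i < k \<Longrightarrow> ee i (m + d) \<le> (2 * real k) ^ d * B"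
proof (induction d arbitrary: i)
  case 0 thus ?case using B by simp
next
  case (Suc d)
  have B1: "1 \<le> B" using B[OF Suc.prems] ee_ge[OF Suc.prems, of m] m by simp
  have k1: "1 \<le> real k" using Suc.prems by simp
  have p1: "1 \<le> (2 * real k) ^ d" using k1 by (intro one_le_power) simp
  have "1 * 1 \<le> (2 * real k) ^ d * B" by (rule mult_mono) (use p1 B1 in auto)
  then have x1: "1 \<le> (2 * real k) ^ d * B" by simp
  have "ee i (m + Suc d) = (\<Sum>j\<in>Rs i. ee j (m + d) + 1)" using Suc.prems by (simp add: ee_Suc)
  also have "\<dots> \<le> (\<Sum>j\<in>Rs i. (2 * real k) ^ d * B + 1)"
  proof (intro sum_mono)
    fix j assume "j \<in> Rs i"
    then have jk: "j < k" by (simp add: Rs_def)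
    show "ee j (m + d) + 1 \<le> (2 * real k) ^ d * B + 1" using Suc.IH[OF jk] by linarith
  qed
  also have "\<dots> = real (card (Rs i)) * ((2 * real k) ^ d * B + 1)" by simp
  also have "\<dots> \<le> real k * ((2 * real k) ^ d * B + 1)"
  proof (rule mult_right_mono)
    show "real (card (Rs i)) \<le> real k" using card_Rs_le[of i] by simp
    show "0 \<le> (2 * real k) ^ d * B + 1" using x1 by linarith
  qed
  also have "\<dots> \<le> real k * (2 * ((2 * real k) ^ d * B))"
  proof (rule mult_left_mono)
    show "(2 * real k) ^ d * B + 1 \<le> 2 * ((2 * real k) ^ d * B)" using x1 by linarith
  qed simp
  also have "\<dots> = (2 * real k) ^ Suc d * B" by (simp add: algebra_simps)
  finally show ?case .
qed

lemma Ksum: "i < k \<Longrightarrow> (\<Sum>j<k. real (K i j) * f j) = (\<Sum>j\<in>Rs i. f j)"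
proof -
  assume i: "i < k"
  have "(\<Sum>j<k. real (K i j) * f j) = (\<Sum>j<k. if K i j \<noteq> 0 then f j else 0)"
    by (intro sum.cong refl) (use i K01' in auto)
  also have "\<dots> = (\<Sum>j\<in>{j\<in>{..<k}. K i j \<noteq> 0}. f j)" by (rule sum.inter_filter[symmetric]) simp
  also have "{j\<in>{..<k}. K i j \<noteq> 0} = Rs i" by (auto simp: Rs_def)
  finally show ?thesis .
qed

lemma card_fw_mpow:
  "i < k \<Longrightarrow> (\<Sum>l<k. real (mpow {..<k} K r i l) * real (card (fw l m))) \<le> real (card (fw i (r + m)))"
proof (induction r arbitrary: i)
  case 0
  have "(\<Sum>l<k. real (mpow {..<k} K 0 i l) * real (card (fw l m))) = (\<Sum>l<k. if i = l then real (card (fw l m)) else 0)"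
    by (intro sum.cong refl) auto
  also have "\<dots> = real (card (fw i m))" using 0 by simp
  finally show ?case by simp
next
  case (Suc r)
  have "(\<Sum>l<k. real (mpow {..<k} K (Suc r) i l) * real (card (fw l m)))
      = (\<Sum>l<k. (\<Sum>j<k. real (K i j) * real (mpow {..<k} K r j l)) * real (card (fw l m)))"
  proof (intro sum.cong refl)
    fix l assume l: "l \<in> {..<k}"
    have e: "mpow {..<k} K (Suc r) i l = (\<Sum>j<k. K i j * mpow {..<k} K r j l)"
      by (rule mpow_Suc_left) (use l Suc.prems in auto)
    show "real (mpow {..<k} K (Suc r) i l) * real (card (fw l m))
        = (\<Sum>j<k. real (K i j) * real (mpow {..<k} K r j l)) * real (card (fw l m))"
      by (simp only: e of_nat_sum of_nat_mult)
  qed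
  also have "\<dots> = (\<Sum>l<k. \<Sum>j<k. real (K i j) * real (mpow {..<k} K r j l) * real (card (fw l m)))"
    by (simp add: sum_distrib_right)
  also have "\<dots> = (\<Sum>j<k. \<Sum>l<k. real (K i j) * real (mpow {..<k} K r j l) * real (card (fw l m)))"
    by (rule sum.swap)
  also have "\<dots> = (\<Sum>j<k. real (K i j) * (\<Sum>l<k. real (mpow {..<k} K r j l) * real (card (fw l m))))"
    by (simp add: sum_distrib_left mult.assoc)
  also have "\<dots> = (\<Sum>j\<in>Rs i. (\<Sum>l<k. real (mpow {..<k} K r j l) * real (card (fw l m))))"
    by (rule Ksum[OF Suc.prems])
  also have "\<dots> \<le> (\<Sum>j\<in>Rs i. real (card (fw j (r + m))))"
    by (intro sum_mono Suc.IH) (simp add: Rs_def)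
  also have "\<dots> \<le> real (card (fw i (Suc r + m)))" using Suc.prems by (simp add: card_fw_Suc)
  finally show ?case .
qed

end


locale TS1 = TS + assumes kpos: "0 < k"
begin

lemma r0_ex: "\<exists>r>0. (\<forall>i<k. \<forall>j<k. mpow {..<k} K r i j > 0) \<and> (\<forall>a b. mpow UNIV A r a b > 0)"
proof -
  obtain p1 where p1: "p1 > 0" "\<forall>m\<ge>p1. \<forall>i\<in>{..<k}. \<forall>j\<in>{..<k}. mpow {..<k} K m i j > 0"
    using prim_mono[OF Kprim] by auto
  obtain p2 where p2: "p2 > 0" "\<forall>m\<ge>p2. \<forall>i\<in>UNIV. \<forall>j\<in>UNIV. mpow UNIV A m i j > 0"
    using prim_mono[OF Aprim] by auto
  show ?thesis using p1 p2 by (intro exI[of _ "max p1 p2"]) auto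
qed

definition rr :: nat where
  "rr = (SOME r. r > 0 \<and> (\<forall>i<k. \<forall>j<k. mpow {..<k} K r i j > 0) \<and> (\<forall>a b. mpow UNIV A r a b > 0))"

lemma rr_props: "rr > 0" "\<And>i j. i < k \<Longrightarrow> j < k \<Longrightarrow> mpow {..<k} K rr i j > 0" "\<And>a b. mpow UNIV A rr a b > 0"
proof -
  have "rr > 0 \<and> (\<forall>i<k. \<forall>j<k. mpow {..<k} K rr i j > 0) \<and> (\<forall>a b. mpow UNIV A rr a b > 0)"
    unfolding rr_def by (rule someI_ex[OF r0_ex])
  then show "rr > 0" "\<And>i j. i < k \<Longrightarrow> j < k \<Longrightarrow> mpow {..<k} K rr i j > 0" "\<And>a b. mpow UNIV A rr a b > 0"
    by blast+
qed

definition lnC :: real where "lnC = ln (real CARD('a))"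

lemma lnC_nonneg: "0 \<le> lnC" by (simp add: lnC_def)

definition Q :: "nat \<Rightarrow> real set" where "Q n = (\<lambda>(i,a). lf i n a / ee i n) ` ({..<k} \<times> UNIV)"
definition U :: "nat \<Rightarrow> real" where "U n = Max (Q n)"
definition L :: "nat \<Rightarrow> real" where "L n = Min (Q n)"

lemma Q_fin: "finite (Q n)" by (simp add: Q_def)
lemma Q_ne: "Q n \<noteq> {}" using kpos by (auto simp: Q_def)

lemma U_ge: "i < k \<Longrightarrow> lf i n a / ee i n \<le> U n"
  unfolding U_def by (rule Max_ge[OF Q_fin]) (auto simp: Q_def)

lemma L_le: "i < k \<Longrightarrow> L n \<le> lf i n a / ee i n"
  unfolding L_def by (rule Min_le[OF Q_fin]) (auto simp: Q_def)

lemma U_att: "\<exists>i<k. \<exists>a. U n = lf i n a / ee i n"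
proof -
  have "U n \<in> Q n" unfolding U_def by (rule Max_in[OF Q_fin Q_ne])
  then show ?thesis by (auto simp: Q_def)
qed

lemma L_att: "\<exists>i<k. \<exists>a. L n = lf i n a / ee i n"
proof -
  have "L n \<in> Q n" unfolding L_def by (rule Min_in[OF Q_fin Q_ne])
  then show ?thesis by (auto simp: Q_def)
qed

lemma ee_pos: "i < k \<Longrightarrow> n \<ge> 1 \<Longrightarrow> 0 < ee i n"
  using ee_ge[of i n] by simp

lemma lf_le_of: "i < k \<Longrightarrow> real (Fa i n a) \<le> exp Z \<Longrightarrow> lf i n a \<le> Z"
  unfolding lf_def using Fa_pos[of i n a] by (metis ln_exp ln_le_cancel_iff exp_gt_zero)

lemma lf_ge_of: "i < k \<Longrightarrow> exp Z \<le> real (Fa i n a) \<Longrightarrow> Z \<le> lf i n a"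
  unfolding lf_def using Fa_pos[of i n a] by (metis ln_exp ln_le_cancel_iff exp_gt_zero)

lemma hypU: "n \<ge> 1 \<Longrightarrow> l < k \<Longrightarrow> real (Fa l n b) \<le> exp (U n * ee l n)"
proof -
  assume n: "n \<ge> 1" and l: "l < k"
  have "lf l n b / ee l n \<le> U n" by (rule U_ge[OF l])
  then have "lf l n b \<le> U n * ee l n" using ee_pos[OF l n] by (simp add: pos_divide_le_eq)
  then show ?thesis using Fa_exp_lf[OF l, of n b] by simp
qed

lemma hypL: "n \<ge> 1 \<Longrightarrow> l < k \<Longrightarrow> exp (L n * ee l n) \<le> real (Fa l n b)"
proof -
  assume n: "n \<ge> 1" and l: "l < k"
  have "L n \<le> lf l n b / ee l n" by (rule L_le[OF l])
  then have "L n * ee l n \<le> lf l n b" using ee_pos[OF l n] by (simp add: pos_le_divide_eq)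
  then show ?thesis using Fa_exp_lf[OF l, of n b] by simp
qed

lemma L_nonneg: "n \<ge> 1 \<Longrightarrow> 0 \<le> L n"
proof -
  assume n: "n \<ge> 1"
  obtain i a where i: "i < k" "L n = lf i n a / ee i n" using L_att by blast
  then show ?thesis using lf_nonneg[OF i(1)] ee_pos[OF i(1) n] by simp
qed

lemma U_le: "n \<ge> 1 \<Longrightarrow> U n \<le> lnC"
proof -
  assume n: "n \<ge> 1"
  obtain i a where i: "i < k" "U n = lf i n a / ee i n" using U_att by blast
  have "lf i n a \<le> ee i n * lnC" unfolding lnC_def by (rule lf_le[OF i(1)])
  then show ?thesis using i(2) ee_pos[OF i(1) n] by (simp add: pos_divide_le_eq mult.commute)
qed

lemma L_le_U: "L n \<le> U n"
  using L_le[OF kpos, of n undefined] U_ge[OF kpos, of n undefined] by linarith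

lemma U_nonneg: "n \<ge> 1 \<Longrightarrow> 0 \<le> U n" using L_nonneg L_le_U by (meson order_trans)

definition T :: "nat \<Rightarrow> real" where "T n = (\<Sum>i<k. ee i n)"

lemma ee_le_T: "i < k \<Longrightarrow> ee i n \<le> T n"
  unfolding T_def by (rule member_le_sum) (auto intro: ee_nonneg)

lemma T_nonneg: "0 \<le> T n" unfolding T_def by (intro sum_nonneg) (auto intro: ee_nonneg)

lemma F1: "n \<ge> 1 \<Longrightarrow> i < k \<Longrightarrow> real (Fa i (q * n) a) \<le> exp (U n * ee i (q * n))"
proof (induction q arbitrary: i a)
  case 0 thus ?case by (simp add: ee_0)
next
  case (Suc q)
  have "real (Fa i (q * n + n) a) \<le> real (Fa i (q * n) a) * exp (U n * (ee i (q * n + n) - ee i (q * n)))"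
    by (rule U1[OF hypU[OF Suc.prems(1)] Suc.prems(2)])
  also have "\<dots> \<le> exp (U n * ee i (q * n)) * exp (U n * (ee i (q * n + n) - ee i (q * n)))"
    by (intro mult_right_mono Suc.IH Suc.prems) auto
  also have "\<dots> = exp (U n * ee i (q * n + n))" by (simp add: exp_add[symmetric] algebra_simps)
  finally show ?case by (simp add: add.commute)
qed

lemma G1: "n \<ge> 1 \<Longrightarrow> i < k \<Longrightarrow> exp (L n * ee i (q * n)) \<le> real (Fa i (q * n) a)"
proof (induction q arbitrary: i a)
  case 0 thus ?case by (simp add: ee_0)
next
  case (Suc q)
  have "exp (L n * ee i (q * n + n)) = exp (L n * ee i (q * n)) * exp (L n * (ee i (q * n + n) - ee i (q * n)))"
    by (simp add: exp_add[symmetric] algebra_simps)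
  also have "\<dots> \<le> real (Fa i (q * n) a) * exp (L n * (ee i (q * n + n) - ee i (q * n)))"
    by (intro mult_right_mono Suc.IH Suc.prems) auto
  also have "\<dots> \<le> real (Fa i (q * n + n) a)"
    by (rule L1[OF hypL[OF Suc.prems(1)] Suc.prems(2)])
  finally show ?case by (simp add: add.commute)
qed

lemma F2:
  assumes n: "n \<ge> 1" and N: "N \<ge> n" and i: "i < k"
  shows "lf i N a \<le> U n * ee i N + lnC * T n"
proof -
  define s where "s = N mod n"
  define q where "q = N div n"
  have Nsq: "N = s + q * n" by (simp add: s_def q_def)
  have sn: "s < n" using n by (simp add: s_def)
  have "real (Fa i (s + q * n) a) \<le> real (Fa i s a) * exp (U n * (ee i (s + q * n) - ee i s))"
    by (rule U1[OF F1[OF n] i])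
  also have "\<dots> \<le> exp (ee i s * lnC) * exp (U n * (ee i (s + q * n) - ee i s))"
    unfolding lnC_def by (intro mult_right_mono Fa_le i) auto
  also have "\<dots> = exp (ee i s * lnC + U n * ee i N - U n * ee i s)"
    by (simp add: exp_add[symmetric] algebra_simps Nsq)
  also have "\<dots> \<le> exp (U n * ee i N + lnC * T n)"
  proof (intro exp_mono)
    have "0 \<le> U n * ee i s" using U_nonneg[OF n] ee_nonneg[OF i] by simp
    moreover have "ee i s * lnC \<le> T n * lnC"
      using ee_mono[OF i, of s n] sn ee_le_T[OF i, of n] lnC_nonneg by (intro mult_right_mono) auto
    ultimately show "ee i s * lnC + U n * ee i N - U n * ee i s \<le> U n * ee i N + lnC * T n"
      by (simp add: mult.commute)
  qed
  finally show ?thesis using Nsq by (intro lf_le_of[OF i]) simp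
qed

lemma G2:
  assumes n: "n \<ge> 1" and N: "N \<ge> n" and i: "i < k"
  shows "L n * ee i N - lnC * T n \<le> lf i N a"
proof -
  define s where "s = N mod n"
  define q where "q = N div n"
  have Nsq: "N = s + q * n" by (simp add: s_def q_def)
  have sn: "s < n" using n by (simp add: s_def)
  have "exp (L n * ee i N - lnC * T n) \<le> exp (L n * (ee i (s + q * n) - ee i s))"
  proof (intro exp_mono)
    have "L n * ee i s \<le> lnC * ee i s"
      using L_le_U[of n] U_le[OF n] ee_nonneg[OF i, of s] by (intro mult_right_mono) auto
    also have "\<dots> \<le> lnC * T n"
      using ee_mono[OF i, of s n] sn ee_le_T[OF i, of n] lnC_nonneg by (intro mult_left_mono) auto
    finally show "L n * ee i N - lnC * T n \<le> L n * (ee i (s + q * n) - ee i s)"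
      using Nsq by (simp add: algebra_simps)
  qed
  also have "\<dots> \<le> real (Fa i s a) * exp (L n * (ee i (s + q * n) - ee i s))"
    using Fa_ge1[OF i, of s a] by simp
  also have "\<dots> \<le> real (Fa i (s + q * n) a)"
    by (rule L1[OF G1[OF n] i])
  finally show ?thesis using Nsq by (intro lf_ge_of[OF i]) simp
qed

lemma U_bound: "n \<ge> 1 \<Longrightarrow> N \<ge> n \<Longrightarrow> U N \<le> U n + lnC * T n / real N"
proof -
  assume n: "n \<ge> 1" and N: "N \<ge> n"
  obtain i a where i: "i < k" "U N = lf i N a / ee i N" using U_att by blast
  have N1: "N \<ge> 1" using n N by simp
  have E: "0 < ee i N" "real N \<le> ee i N" using ee_pos[OF i(1) N1] ee_ge[OF i(1)] by auto
  have "U N \<le> (U n * ee i N + lnC * T n) / ee i N"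
    using i F2[OF n N i(1), of a] E by (simp add: divide_right_mono)
  also have "\<dots> = U n + lnC * T n / ee i N" using E by (simp add: field_simps)
  also have "\<dots> \<le> U n + lnC * T n / real N"
    using E N1 T_nonneg[of n] lnC_nonneg by (intro add_left_mono divide_left_mono) auto
  finally show ?thesis .
qed

lemma L_bound: "n \<ge> 1 \<Longrightarrow> N \<ge> n \<Longrightarrow> L n - lnC * T n / real N \<le> L N"
proof -
  assume n: "n \<ge> 1" and N: "N \<ge> n"
  obtain i a where i: "i < k" "L N = lf i N a / ee i N" using L_att by blast
  have N1: "N \<ge> 1" using n N by simp
  have E: "0 < ee i N" "real N \<le> ee i N" using ee_pos[OF i(1) N1] ee_ge[OF i(1)] by auto
  have "L n - lnC * T n / real N \<le> L n - lnC * T n / ee i N"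
    using E N1 T_nonneg[of n] lnC_nonneg by (intro diff_left_mono divide_left_mono) auto
  also have "\<dots> = (L n * ee i N - lnC * T n) / ee i N" using E by (simp add: field_simps)
  also have "\<dots> \<le> L N"
    using i G2[OF n N i(1), of a] E by (simp add: divide_right_mono)
  finally show ?thesis .
qed

lemma eventually_small: "0 \<le> c \<Longrightarrow> 0 < e \<Longrightarrow> \<exists>N0\<ge>1. \<forall>N\<ge>N0. c / real N < e"
proof -
  assume c: "0 \<le> c" and e: "0 < e"
  obtain M :: nat where M: "c / e < real M" using reals_Archimedean2 by blast
  have "\<forall>N\<ge>max M 1. c / real N < e"
  proof (intro allI impI)
    fix N assume "max M 1 \<le> N"
    then have N: "real M \<le> real N" "1 \<le> N" by auto
    then have "c / e < real N" using M by simp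
    then show "c / real N < e" using e N by (simp add: divide_less_eq mult.commute pos_divide_less_eq)
  qed
  then show ?thesis by (intro exI[of _ "max M 1"]) auto
qed

definition Us :: real where "Us = Inf (U ` {1..})"
definition Ls :: real where "Ls = Sup (L ` {1..})"

lemma U_lim: "U \<longlonglongrightarrow> Us"
proof (rule LIMSEQ_I)
  fix e :: real assume e: "0 < e"
  have bdd: "bdd_below (U ` {1..})" by (rule bdd_belowI[of _ 0]) (auto intro: U_nonneg)
  have ne: "U ` {1..} \<noteq> {}" by auto
  have "Us < Us + e / 2" using e by simp
  then have "\<exists>x\<in>U ` {1..}. x < Us + e / 2"
    using cInf_less_iff[OF ne bdd, of "Us + e / 2"] unfolding Us_def by blast
  then obtain n0 where n0: "n0 \<ge> 1" "U n0 < Us + e / 2" by auto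
  obtain N0 where N0: "N0 \<ge> 1" "\<forall>N\<ge>N0. lnC * T n0 / real N < e / 2"
    using eventually_small[of "lnC * T n0" "e/2"] e T_nonneg lnC_nonneg by auto
  show "\<exists>no. \<forall>N\<ge>no. norm (U N - Us) < e"
  proof (intro exI allI impI)
    fix N assume N: "max N0 n0 \<le> N"
    have NN: "N \<ge> N0" "N \<ge> n0" using N by auto
    have "U N \<le> U n0 + lnC * T n0 / real N" using U_bound[OF n0(1) NN(2)] .
    moreover have "lnC * T n0 / real N < e / 2" using N0(2) NN(1) by blast
    ultimately have up: "U N < Us + e" using n0(2) by linarith
    have N1: "N \<in> {1..}" using NN n0 by simp
    have "Us \<le> U N" unfolding Us_def by (rule cInf_lower[OF imageI[OF N1] bdd])
    then show "norm (U N - Us) < e" using up by simp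
  qed
qed

lemma L_lim: "L \<longlonglongrightarrow> Ls"
proof (rule LIMSEQ_I)
  fix e :: real assume e: "0 < e"
  have bdd: "bdd_above (L ` {1..})" by (rule bdd_aboveI[of _ lnC]) (auto intro: order_trans[OF L_le_U U_le])
  have ne: "L ` {1..} \<noteq> {}" by auto
  have "Ls - e / 2 < Ls" using e by simp
  then have "\<exists>x\<in>L ` {1..}. Ls - e / 2 < x"
    using less_cSup_iff[OF ne bdd, of "Ls - e / 2"] unfolding Ls_def by blast
  then obtain n0 where n0: "n0 \<ge> 1" "Ls - e / 2 < L n0" by auto
  obtain N0 where N0: "N0 \<ge> 1" "\<forall>N\<ge>N0. lnC * T n0 / real N < e / 2"
    using eventually_small[of "lnC * T n0" "e/2"] e T_nonneg lnC_nonneg by auto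
  show "\<exists>no. \<forall>N\<ge>no. norm (L N - Ls) < e"
  proof (intro exI allI impI)
    fix N assume N: "max N0 n0 \<le> N"
    have NN: "N \<ge> N0" "N \<ge> n0" using N by auto
    have "L n0 - lnC * T n0 / real N \<le> L N" using L_bound[OF n0(1) NN(2)] .
    moreover have "lnC * T n0 / real N < e / 2" using N0(2) NN(1) by blast
    ultimately have lo: "Ls - e < L N" using n0(2) by linarith
    have N1: "N \<in> {1..}" using NN n0 by simp
    have "L N \<le> Ls" unfolding Ls_def by (rule cSup_upper[OF imageI[OF N1] bdd])
    then show "norm (L N - Ls) < e" using lo by simp
  qed
qed

end


context TS1 begin

definition rho :: real where "rho = 1 / (2 * real k) ^ (2 * rr)"

lemma rho_pos: "0 < rho" using kpos by (simp add: rho_def)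

lemma ratio:
  assumes n: "n \<ge> rr + 1" and i: "i < k" and j: "j < k"
  shows "rho * ee i (rr + n) \<le> ee j n"
proof -
  define m where "m = n - rr"
  have m1: "m \<ge> 1" and nm: "n = m + rr" using n by (auto simp: m_def)
  have B: "ee l m \<le> ee j n" if l: "l < k" for l
    using ee_path[OF j l rr_props(2)[OF j l], of m] nm by (simp add: add.commute)
  have "ee i (m + 2 * rr) \<le> (2 * real k) ^ (2 * rr) * ee j n"
    by (rule ee_growth[OF m1 B i])
  moreover have "rr + n = m + 2 * rr" using nm by simp
  then have "ee i (rr + n) = ee i (m + 2 * rr)" by (rule arg_cong)
  ultimately have le: "ee i (rr + n) \<le> (2 * real k) ^ (2 * rr) * ee j n" by linarith
  have pos: "0 < (2 * real k) ^ (2 * rr)" using kpos by simp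
  have "rho * ee i (rr + n) = ee i (rr + n) / (2 * real k) ^ (2 * rr)" by (simp add: rho_def)
  also have "\<dots> \<le> ee j n" using le pos by (simp add: pos_divide_le_eq mult.commute)
  finally show ?thesis .
qed

lemma mix:
  assumes n: "n \<ge> rr + 1"
  shows "L n + rho * (U n - L n) - lnC * T rr / real (rr + n) \<le> L (rr + n)"
proof -
  have n1: "n \<ge> 1" using n by simp
  obtain j0 b0 where j0: "j0 < k" "U n = lf j0 n b0 / ee j0 n" using U_att by blast
  obtain i a where i: "i < k" "L (rr + n) = lf i (rr + n) a / ee i (rr + n)" using L_att by blast
  let ?E = "ee i (rr + n)"
  have E0: "0 < ?E" "real (rr + n) \<le> ?E" using ee_pos[OF i(1), of "rr + n"] ee_ge[OF i(1), of "rr + n"] n by auto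
  have ej: "0 < ee j0 n" using ee_pos[OF j0(1) n1] .
  have lfj: "lf j0 n b0 = U n * ee j0 n" using j0(2) ej by simp
  have M: "real (Fa j0 n b0) * exp (L n * (ee i (rr + n) - ee i rr - ee j0 n)) \<le> real (Fa i (rr + n) a)"
    by (rule M1[OF hypL[OF n1] j0(1) i(1) rr_props(2)[OF i(1) j0(1)] rr_props(3)])
  have "exp (lf j0 n b0 + L n * (ee i (rr + n) - ee i rr - ee j0 n)) = real (Fa j0 n b0) * exp (L n * (ee i (rr + n) - ee i rr - ee j0 n))"
    using Fa_exp_lf[OF j0(1), of n b0] by (simp add: exp_add)
  then have key: "lf j0 n b0 + L n * (ee i (rr + n) - ee i rr - ee j0 n) \<le> lf i (rr + n) a"
    using M by (intro lf_ge_of[OF i(1)]) simp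
  have key': "U n * ee j0 n + L n * ?E - L n * ee i rr - L n * ee j0 n \<le> lf i (rr + n) a"
    using key lfj by (simp add: algebra_simps)
  have r1: "rho * ?E \<le> ee j0 n" by (rule ratio[OF n i(1) j0(1)])
  have UL: "0 \<le> U n - L n" using L_le_U[of n] by simp
  have r2: "(U n - L n) * (rho * ?E) \<le> (U n - L n) * ee j0 n" using r1 UL by (rule mult_left_mono)
  have r2': "rho * U n * ?E - rho * L n * ?E \<le> U n * ee j0 n - L n * ee j0 n"
    using r2 by (simp add: algebra_simps)
  have r3: "L n * ee i rr \<le> lnC * T rr"
  proof -
    have "L n * ee i rr \<le> lnC * ee i rr"
      using L_le_U[of n] U_le[OF n1] ee_nonneg[OF i(1), of rr] by (intro mult_right_mono) auto
    also have "\<dots> \<le> lnC * T rr" using ee_le_T[OF i(1)] lnC_nonneg by (intro mult_left_mono) auto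
    finally show ?thesis .
  qed
  have T0: "L n * ?E + rho * U n * ?E - rho * L n * ?E - lnC * T rr \<le> lf i (rr + n) a"
    using key' r2' r3 by linarith
  have "L n + rho * (U n - L n) - lnC * T rr / real (rr + n) \<le> L n + rho * (U n - L n) - lnC * T rr / ?E"
  proof (intro diff_left_mono divide_left_mono)
    show "real (rr + n) \<le> ?E" by (rule E0(2))
    show "0 \<le> lnC * T rr" using T_nonneg[of rr] lnC_nonneg by simp
    show "0 < ?E * real (rr + n)" using E0(1) n by (intro mult_pos_pos) auto
  qed
  also have "\<dots> = (L n * ?E + rho * U n * ?E - rho * L n * ?E - lnC * T rr) / ?E"
    using E0 by (simp add: field_simps)
  also have "\<dots> \<le> lf i (rr + n) a / ?E" using T0 E0 by (intro divide_right_mono) auto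
  finally show ?thesis using i(2) by simp
qed

lemma UL_eq: "Us = Ls"
proof -
  have lim1: "(\<lambda>n. L n + rho * (U n - L n) - lnC * T rr / real (n + rr)) \<longlonglongrightarrow> Ls + rho * (Us - Ls) - 0"
    by (intro tendsto_intros L_lim U_lim LIMSEQ_ignore_initial_segment[OF lim_const_over_n])
  have lim2: "(\<lambda>n. L (n + rr)) \<longlonglongrightarrow> Ls" by (rule LIMSEQ_ignore_initial_segment[OF L_lim])
  have "Ls + rho * (Us - Ls) - 0 \<le> Ls"
  proof (rule LIMSEQ_le[OF lim1 lim2])
    show "\<exists>N. \<forall>n\<ge>N. L n + rho * (U n - L n) - lnC * T rr / real (n + rr) \<le> L (n + rr)"
      using mix by (intro exI[of _ "rr + 1"]) (simp add: add.commute)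
  qed
  then have "rho * (Us - Ls) \<le> 0" by simp
  then have "Us \<le> Ls" using rho_pos by (simp add: mult_le_0_iff)
  moreover have "Ls \<le> Us" by (rule LIMSEQ_le[OF L_lim U_lim]) (use L_le_U in auto)
  ultimately show ?thesis by simp
qed

definition hh :: real where "hh = Us"

lemma hh_nonneg: "0 \<le> hh"
  unfolding hh_def by (rule LIMSEQ_le_const[OF U_lim]) (auto intro: U_nonneg)

lemma L_lim_hh: "L \<longlonglongrightarrow> hh" using L_lim UL_eq by (simp add: hh_def)

lemma upper_unif:
  assumes e: "e > 0"
  shows "\<exists>N\<ge>1. \<forall>n\<ge>N. \<forall>i<k. \<forall>a. lf i n a \<le> (hh + e) * ee i n"
proof -
  obtain N0 where N0: "\<forall>n\<ge>N0. norm (U n - hh) < e" using LIMSEQ_D[OF U_lim e] unfolding hh_def by blast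
  show ?thesis
  proof (intro exI[of _ "max N0 1"] conjI allI impI)
    fix n i a assume n: "max N0 1 \<le> n" and i: "i < k"
    then have n1: "n \<ge> 1" and Un: "U n < hh + e" using N0 by auto
    have "lf i n a / ee i n \<le> U n" by (rule U_ge[OF i])
    then have "lf i n a \<le> U n * ee i n" using ee_pos[OF i n1] by (simp add: pos_divide_le_eq)
    also have "\<dots> \<le> (hh + e) * ee i n" using Un ee_nonneg[OF i, of n] by (intro mult_right_mono) auto
    finally show "lf i n a \<le> (hh + e) * ee i n" .
  qed simp
qed

lemma Fsum_bound:
  assumes e: "e > 0"
  shows "\<exists>c1\<ge>0. \<forall>z<k. \<forall>d. real (\<Sum>a\<in>UNIV. Fa z d a) \<le> exp ((hh + e) * real (card (fw z d)) + c1)"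
proof -
  obtain N where N: "N \<ge> 1" "\<forall>n\<ge>N. \<forall>i<k. \<forall>a. lf i n a \<le> (hh + e) * ee i n" using upper_unif[OF e] by blast
  define c1 where "c1 = lnC + lnC * T N"
  have c1: "c1 \<ge> 0" using lnC_nonneg T_nonneg by (simp add: c1_def)
  have he: "0 \<le> hh + e" using hh_nonneg e by simp
  have each: "real (Fa z d a) \<le> exp ((hh + e) * ee z d + lnC * T N)" if z: "z < k" for z d a
  proof (cases "d \<ge> N")
    case True
    then have "lf z d a \<le> (hh + e) * ee z d" using N z by blast
    moreover have "0 \<le> lnC * T N" using lnC_nonneg T_nonneg by simp
    ultimately have "lf z d a \<le> (hh + e) * ee z d + lnC * T N" by linarith
    then show ?thesis using Fa_exp_lf[OF z, of d a] by simp
  next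
    case False
    have "lf z d a \<le> ee z d * lnC" unfolding lnC_def by (rule lf_le[OF z])
    also have "\<dots> \<le> T N * lnC"
      using ee_mono[OF z, of d N] False ee_le_T[OF z, of N] lnC_nonneg by (intro mult_right_mono) auto
    also have "\<dots> \<le> (hh + e) * ee z d + lnC * T N" using he ee_nonneg[OF z, of d] by (simp add: mult.commute)
    finally show ?thesis using Fa_exp_lf[OF z, of d a] by simp
  qed
  have "real (\<Sum>a\<in>UNIV. Fa z d a) \<le> exp ((hh + e) * real (card (fw z d)) + c1)" if z: "z < k" for z d
  proof -
    have "real (\<Sum>a\<in>UNIV. Fa z d a) = (\<Sum>a\<in>UNIV. real (Fa z d a))" by simp
    also have "\<dots> \<le> (\<Sum>a\<in>(UNIV::'a set). exp ((hh + e) * ee z d + lnC * T N))"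
      by (intro sum_mono each z)
    also have "\<dots> = real CARD('a) * exp ((hh + e) * ee z d + lnC * T N)" by simp
    also have "\<dots> = exp (lnC + (hh + e) * ee z d + lnC * T N)" by (simp add: lnC_def exp_add)
    also have "\<dots> \<le> exp ((hh + e) * real (card (fw z d)) + c1)"
      using he by (intro exp_mono) (simp add: c1_def ee_def algebra_simps)
    finally show ?thesis .
  qed
  then show ?thesis using c1 by blast
qed

end


lemma pow2_ge: "q * q + q + 2 \<le> 2 * (2::nat) ^ q"
proof (induction q)
  case 0 thus ?case by simp
next
  case (Suc q)
  have a: "q \<le> q * q" by (rule le_square)
  have b: "Suc q * Suc q + Suc q + 2 = q * q + 3 * q + 4" by (simp add: algebra_simps)
  have c: "2 * (2::nat) ^ Suc q = 4 * 2 ^ q" by simp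
  show ?case unfolding b c using Suc.IH a by linarith
qed

lemma ln_over_lim:
  fixes f :: "nat \<Rightarrow> real"
  assumes "filterlim f at_top sequentially"
  shows "(\<lambda>n. ln (f n) / f n) \<longlonglongrightarrow> 0"
  using filterlim_compose[OF ln_x_over_x_tendsto_0 assms] by simp

lemma const_over_lim:
  fixes f :: "nat \<Rightarrow> real"
  assumes "filterlim f at_top sequentially"
  shows "(\<lambda>n. c / f n) \<longlonglongrightarrow> 0"
  by (rule real_tendsto_divide_at_top[OF tendsto_const assms])

lemma squeeze_eps:
  fixes x :: "nat \<Rightarrow> real"
  assumes "\<And>e. e > 0 \<Longrightarrow> \<exists>N. \<forall>n\<ge>N. x n \<le> h + e \<and> h - e \<le> x n"
  shows "x \<longlonglongrightarrow> h"
proof (rule LIMSEQ_I)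
  fix r :: real assume r: "0 < r"
  obtain N where N: "\<forall>n\<ge>N. x n \<le> h + r / 2 \<and> h - r / 2 \<le> x n" using assms[of "r/2"] r by auto
  show "\<exists>no. \<forall>n\<ge>no. norm (x n - h) < r"
  proof (intro exI allI impI)
    fix n assume "N \<le> n"
    then have "x n \<le> h + r / 2" "h - r / 2 \<le> x n" using N by auto
    then show "norm (x n - h) < r" using r by simp
  qed
qed

context TS1 begin

lemma card_fw_ge: "i < k \<Longrightarrow> real n + 1 \<le> real (card (fw i n))"
  using ee_ge[of i n] by (simp add: ee_def)

lemma fw_at_top: "i < k \<Longrightarrow> filterlim (\<lambda>n. real (card (fw i n))) at_top sequentially"
proof (rule filterlim_at_top_mono[OF filterlim_real_sequentially], rule always_eventually, rule allI)
  fix n assume i: "i < k"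
  show "real n \<le> real (card (fw i n))" using card_fw_ge[OF i, of n] by linarith
qed

definition C0 :: real where "C0 = 2 * (2 * real k) ^ (2 * rr)"

lemma size_ratio:
  assumes n: "n \<ge> rr + 1" and i: "i < k" and l: "l < k"
  shows "real (card (fw l n)) \<le> C0 * real (card (fw i n))"
proof -
  let ?P = "(2 * real k) ^ (2 * rr)"
  have P1: "1 \<le> ?P" using kpos by (intro one_le_power) simp
  have "ee l n \<le> ee l (rr + n)" by (rule ee_mono[OF l]) simp
  also have "\<dots> \<le> ?P * ee i n"
  proof -
    have "rho * ee l (rr + n) \<le> ee i n" by (rule ratio[OF n l i])
    then show ?thesis using P1 by (simp add: rho_def divide_le_eq mult.commute)
  qed
  finally have le: "ee l n \<le> ?P * ee i n" .
  have ei: "0 \<le> ee i n" by (rule ee_nonneg[OF i])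
  have "real (card (fw l n)) = ee l n + 1" by (simp add: ee_def)
  also have "\<dots> \<le> ?P * (ee i n + 1) + ?P * (ee i n + 1)"
  proof -
    have a: "?P * ee i n \<le> ?P * (ee i n + 1)" using P1 by (intro mult_left_mono) auto
    have "1 * 1 \<le> ?P * (ee i n + 1)" using P1 ei by (intro mult_mono) auto
    then show ?thesis using le a by linarith
  qed
  also have "\<dots> = C0 * real (card (fw i n))" by (simp add: C0_def ee_def)
  finally show ?thesis .
qed

lemma card_Delta_Suc: "real (card (Delta k K (Suc n))) = 1 + (\<Sum>x<k. real (card (fw x n)))"
  by (simp add: Delta_Suc card_tree)

lemma Delta_ratio:
  assumes n: "n \<ge> rr + 1" and i: "i < k"
  shows "real (card (Delta k K (Suc n))) \<le> (1 + real k * C0) * real (card (fw i n))"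
proof -
  have s1: "1 \<le> real (card (fw i n))" using card_fw_ge[OF i, of n] by simp
  have "real (card (Delta k K (Suc n))) = 1 + (\<Sum>x<k. real (card (fw x n)))" by (rule card_Delta_Suc)
  also have "\<dots> \<le> (1 + real k * C0) * real (card (fw i n))"
  proof -
    have "(\<Sum>x<k. real (card (fw x n))) \<le> (\<Sum>x<(k::nat). C0 * real (card (fw i n)))"
      by (intro sum_mono size_ratio[OF n i]) auto
    also have "\<dots> = real k * C0 * real (card (fw i n))" by simp
    moreover have "(1 + real k * C0) * real (card (fw i n)) = real (card (fw i n)) + real k * C0 * real (card (fw i n))"
      by (simp add: algebra_simps)
    ultimately show ?thesis using s1 by linarith
  qed
  finally show ?thesis .
qed

lemma lnDelta_lim:
  assumes i: "i < k"
  shows "(\<lambda>n. ln (real (card (Delta k K (Suc n)))) / real (card (fw i n))) \<longlonglongrightarrow> 0"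
proof -
  let ?s = "\<lambda>n. real (card (fw i n))"
  let ?C = "1 + real k * C0"
  have C1: "1 \<le> ?C" using kpos by (simp add: C0_def)
  have up: "(\<lambda>n. ln ?C / ?s n + ln (?s n) / ?s n) \<longlonglongrightarrow> 0 + 0"
    by (intro tendsto_add const_over_lim ln_over_lim fw_at_top i)
  show ?thesis
  proof (rule tendsto_sandwich[OF _ _ tendsto_const up[simplified]])
    show "\<forall>\<^sub>F n in sequentially. 0 \<le> ln (real (card (Delta k K (Suc n)))) / ?s n"
    proof (rule always_eventually, intro allI divide_nonneg_nonneg)
      fix n
      have "[] \<in> Delta k K (Suc n)" by (rule Nil_Delta)
      then have "0 < card (Delta k K (Suc n))" using finite_Delta[of "Suc n"] by (auto simp: card_gt_0_iff)
      then have "1 \<le> card (Delta k K (Suc n))" by simp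
      then show "0 \<le> ln (real (card (Delta k K (Suc n))))" by simp
    qed simp
    show "\<forall>\<^sub>F n in sequentially. ln (real (card (Delta k K (Suc n)))) / ?s n \<le> ln ?C / ?s n + ln (?s n) / ?s n"
    proof (rule eventually_sequentiallyI[of "rr + 1"])
      fix n assume n: "rr + 1 \<le> n"
      have s1: "1 \<le> ?s n" using card_fw_ge[OF i, of n] by simp
      have "0 < card (Delta k K (Suc n))" using finite_Delta[of "Suc n"] Nil_Delta[of "Suc n"] by (auto simp: card_gt_0_iff)
      then have D1: "0 < real (card (Delta k K (Suc n)))" by simp
      have "ln (real (card (Delta k K (Suc n)))) \<le> ln (?C * ?s n)"
      proof (subst ln_le_cancel_iff)
        show "0 < real (card (Delta k K (Suc n)))" by (rule D1)
        show "0 < ?C * ?s n" using C1 s1 by simp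
        show "real (card (Delta k K (Suc n))) \<le> ?C * ?s n" by (rule Delta_ratio[OF n i])
      qed
      also have "\<dots> = ln ?C + ln (?s n)" by (rule ln_mult_pos) (use C1 s1 in auto)
      finally have "ln (real (card (Delta k K (Suc n)))) \<le> ln ?C + ln (?s n)" .
      then show "ln (real (card (Delta k K (Suc n)))) / ?s n \<le> ln ?C / ?s n + ln (?s n) / ?s n"
        using s1 by (simp add: add_divide_distrib[symmetric] divide_right_mono)
    qed
  qed
qed

lemma exp_growth:
  assumes k2: "k \<ge> 2"
  shows "i < k \<Longrightarrow> 2 ^ q \<le> real (card (fw i (q * rr + s)))"
proof (induction q arbitrary: i)
  case 0 thus ?case using card_fw_ge[OF 0, of s] by simp
next
  case (Suc q)
  have "2 ^ Suc q \<le> real k * 2 ^ q" using k2 by simp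
  also have "\<dots> = (\<Sum>l<k. (2::real) ^ q)" by simp
  also have "\<dots> \<le> (\<Sum>l<k. real (mpow {..<k} K rr i l) * real (card (fw l (q * rr + s))))"
  proof (intro sum_mono)
    fix l assume l: "l \<in> {..<k}"
    have m1: "1 \<le> real (mpow {..<k} K rr i l)" using rr_props(2)[OF Suc.prems, of l] l by simp
    have m2: "2 ^ q \<le> real (card (fw l (q * rr + s)))" using Suc.IH l by simp
    have "1 * 2 ^ q \<le> real (mpow {..<k} K rr i l) * real (card (fw l (q * rr + s)))"
      using m1 m2 by (intro mult_mono) auto
    then show "2 ^ q \<le> real (mpow {..<k} K rr i l) * real (card (fw l (q * rr + s)))" by simp
  qed
  also have "\<dots> \<le> real (card (fw i (rr + (q * rr + s))))" by (rule card_fw_mpow[OF Suc.prems])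
  finally show ?case by (simp add: add.assoc add.commute add.left_commute)
qed

lemma lin_over_lim:
  assumes k2: "k \<ge> 2" and i: "i < k"
  shows "(\<lambda>n. real (n + 1) / real (card (fw i n))) \<longlonglongrightarrow> 0"
proof (rule LIMSEQ_I)
  fix e :: real assume e: "0 < e"
  have r: "rr > 0" by (rule rr_props(1))
  obtain Q :: nat where Q: "2 * real rr / e < real Q" using reals_Archimedean2 by blast
  have "0 < 2 * real rr / e" using r e by simp
  then have "0 < real Q" using Q by linarith
  then have Q1: "Q \<ge> 1" by simp
  show "\<exists>no. \<forall>n\<ge>no. norm (real (n + 1) / real (card (fw i n)) - 0) < e"
  proof (intro exI allI impI)
    fix n assume n: "Q * rr \<le> n"
    define q where "q = n div rr"
    define s where "s = n mod rr"
    have nq: "n = q * rr + s" by (simp add: q_def s_def)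
    have "(Q * rr) div rr \<le> n div rr" using n by (rule div_le_mono)
    then have qQ: "Q \<le> q" using r by (simp add: q_def)
    have q1: "q \<ge> 1" using qQ Q1 by simp
    have "s < rr" using r by (simp add: s_def)
    then have n1: "real (n + 1) \<le> real rr * (real q + 1)" using nq by (simp add: algebra_simps) 
    have sz: "2 ^ q \<le> real (card (fw i n))" using exp_growth[OF k2 i, of q s] nq by simp
    have "real (q * q + q + 2) \<le> real (2 * 2 ^ q)" using pow2_ge[of q] by (simp only: of_nat_le_iff)
    then have p2: "real q * real q + real q + 2 \<le> 2 * 2 ^ q" by simp
    have pos: "0 < (2::real) ^ q" by simp
    have "real (n + 1) / real (card (fw i n)) \<le> real rr * (real q + 1) / 2 ^ q"
      using n1 sz pos by (intro frac_le) auto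
    also have "\<dots> \<le> 2 * real rr / real q"
    proof -
      have "real rr * (real q + 1) * real q \<le> 2 * real rr * 2 ^ q"
      proof -
        have "(real q + 1) * real q \<le> 2 * 2 ^ q" using p2 by (simp add: algebra_simps)
        then have "real rr * ((real q + 1) * real q) \<le> real rr * (2 * 2 ^ q)" by (intro mult_left_mono) auto
        then show ?thesis by (simp add: algebra_simps)
      qed
      moreover have "0 < real q" using q1 by simp
      ultimately show ?thesis using pos by (simp add: field_simps)
    qed
    also have "\<dots> \<le> 2 * real rr / real Q" using qQ Q1 by (intro divide_left_mono) auto
    also have "\<dots> < e" using Q e Q1 by (simp add: divide_less_eq mult.commute pos_divide_less_eq)
    finally show "norm (real (n + 1) / real (card (fw i n)) - 0) < e" by simp
  qed
qed

end


lemma ln_le_from: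
  fixes p D :: nat and Y :: real
  assumes "0 < p" "0 < D" "real p \<le> real D * exp Y"
  shows "ln (real p) \<le> ln (real D) + Y"
proof -
  have "ln (real p) \<le> ln (real D * exp Y)" using assms by (subst ln_le_cancel_iff) auto
  also have "\<dots> = ln (real D) + Y" using assms by (simp add: ln_mult_pos)
  finally show ?thesis .
qed

context TS1 begin

definition NC :: bool where "NC \<longleftrightarrow> (\<forall>i<k. \<forall>j<k. K i j \<noteq> 0)"

lemma notNC_k2: "\<not> NC \<Longrightarrow> k \<ge> 2"
proof (rule ccontr)
  assume nc: "\<not> NC" and "\<not> k \<ge> 2"
  then have k1: "k = 1" using kpos by simp
  obtain j where "j < k" "K 0 j = 1" using K_row[of 0] kpos by blast
  then have K00: "K 0 0 \<noteq> 0" using k1 by simp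
  have NC unfolding NC_def
  proof (intro allI impI)
    fix i j assume "i < k" "j < k"
    then have "i = 0" "j = 0" using k1 by auto
    then show "K i j \<noteq> 0" using K00 by simp
  qed
  then show False using nc by simp
qed

lemma Bd_up:
  assumes e: "e > 0"
  shows "\<exists>c1\<ge>0. \<exists>c2\<ge>0. \<forall>\<sigma>\<in>W. \<forall>Z. Z \<subseteq> {..<k} \<longrightarrow> (\<forall>d. real (Bd \<sigma> Z d) \<le>
     exp ((hh + e) * real (\<Sum>z\<in>Z. card (fw z d)) + real (card Z) * c1 + (if NC then 0 else real (d + 1) * c2)))"
proof -
  obtain c1 where c1: "c1 \<ge> 0" "\<forall>z<k. \<forall>d. real (\<Sum>a\<in>UNIV. Fa z d a) \<le> exp ((hh + e) * real (card (fw z d)) + c1)"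
    using Fsum_bound[OF e] by blast
  define c2 where "c2 = ln (real CARD('a)) + real k * c1"
  have c2: "c2 \<ge> 0" using c1 by (simp add: c2_def)
  have he: "0 \<le> hh + e" using hh_nonneg e by simp
  have "real (Bd \<sigma> Z d) \<le> exp ((hh + e) * real (\<Sum>z\<in>Z. card (fw z d)) + real (card Z) * c1 + (if NC then 0 else real (d + 1) * c2))"
    if \<sigma>: "\<sigma> \<in> W" and Z: "Z \<subseteq> {..<k}" for \<sigma> Z d
  proof (cases NC)
    case True
    have fZ: "finite Z" using Z finite_subset by blast
    have "real (Bd \<sigma> Z d) = (\<Prod>z\<in>Z. real (\<Sum>a\<in>UNIV. Fa z d a))"
      using Bd_nocancel[of \<sigma> Z d] True \<sigma> Z by (simp add: NC_def)
    also have "\<dots> \<le> (\<Prod>z\<in>Z. exp ((hh + e) * real (card (fw z d)) + c1))"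
      using Z c1 by (intro prod_mono conjI) (auto intro: sum_nonneg)
    also have "\<dots> = exp (\<Sum>z\<in>Z. (hh + e) * real (card (fw z d)) + c1)" using fZ by (simp add: exp_sum)
    also have "(\<Sum>z\<in>Z. (hh + e) * real (card (fw z d)) + c1) = (hh + e) * real (\<Sum>z\<in>Z. card (fw z d)) + real (card Z) * c1"
      by (simp add: sum.distrib sum_distrib_left)
    finally show ?thesis using True by simp
  next
    case False
    have "real (Bd \<sigma> Z d) \<le> exp ((hh + e) * real (\<Sum>z\<in>Z. card (fw z d)) + real (card Z) * c1 + real (d + 1) * c2)"
      by (rule Bd_bound[OF he c1(1) c2_def _ Z]) (use c1(2) in blast)
    then show ?thesis using False by simp
  qed
  then show ?thesis using c1(1) c2 by blast
qed

lemma err_lim: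
  assumes "filterlim f at_top sequentially" and "\<not> NC \<Longrightarrow> (\<lambda>n. real (n + 1) / f n) \<longlonglongrightarrow> 0"
  shows "(\<lambda>n. c / f n + (if NC then 0 else c2 * (real (n + 1) / f n))) \<longlonglongrightarrow> 0"
proof (cases NC)
  case True thus ?thesis using const_over_lim[OF assms(1), of c] by simp
next
  case False
  have "(\<lambda>n. c / f n + c2 * (real (n + 1) / f n)) \<longlonglongrightarrow> 0 + c2 * 0"
    by (intro tendsto_add tendsto_mult const_over_lim assms(1) tendsto_const assms(2) False)
  then show ?thesis using False by simp
qed

lemma stem_lim:
  assumes i: "i < k"
  shows "(\<lambda>n. ln (real (p_stem k K X [i] n)) / real (card (Delta_bar k K [i] n))) \<longlonglongrightarrow> hh"
proof -
  let ?s = "\<lambda>n. real (card (fw i n))"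
  let ?p = "\<lambda>n. p_stem k K X [i] n"
  have seq: "(\<lambda>n. ln (real (?p n)) / real (card (Delta_bar k K [i] n))) = (\<lambda>n. ln (real (?p n)) / ?s n)"
    using i by (simp add: card_Delta_bar)
  have s1: "1 \<le> ?s n" for n using card_fw_ge[OF i, of n] by simp
  have p1: "1 \<le> ?p n" for n using stem_lb[OF i, of n undefined] Fa_ge1[OF i, of n undefined] by linarith
  show ?thesis unfolding seq
  proof (rule squeeze_eps)
    fix e :: real assume e: "e > 0"
    have lo_lim: "(\<lambda>n. L n - lnC / ?s n) \<longlonglongrightarrow> hh - 0"
      by (intro tendsto_diff L_lim_hh const_over_lim fw_at_top i)
    obtain N1 where N1: "\<forall>n\<ge>N1. norm ((L n - lnC / ?s n) - hh) < e" using LIMSEQ_D[OF lo_lim e] by auto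
    have lower: "hh - e \<le> ln (real (?p n)) / ?s n" if n: "n \<ge> max N1 1" for n
    proof -
      have n1: "n \<ge> 1" using n by simp
      have "L n * ee i n \<le> lf i n undefined" by (rule lf_ge_of[OF i hypL[OF n1 i]])
      also have "lf i n undefined \<le> ln (real (?p n))"
        unfolding lf_def using stem_lb[OF i, of n undefined] Fa_pos[OF i, of n undefined] by simp
      finally have a: "L n * (?s n - 1) \<le> ln (real (?p n))" by (simp add: ee_def)
      have "L n - lnC / ?s n \<le> L n - L n / ?s n"
        using L_le_U[of n] U_le[OF n1] s1[of n] by (intro diff_left_mono divide_right_mono) auto
      also have "\<dots> = L n * (?s n - 1) / ?s n"
      proof -
        have "?s n \<noteq> 0" using s1[of n] by linarith
        then show ?thesis by (simp add: right_diff_distrib diff_divide_distrib)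
      qed
      also have "\<dots> \<le> ln (real (?p n)) / ?s n" using a s1[of n] by (intro divide_right_mono) auto
      finally have "L n - lnC / ?s n \<le> ln (real (?p n)) / ?s n" .
      moreover have "hh - e < L n - lnC / ?s n" using N1 n by force
      ultimately show ?thesis by linarith
    qed
    obtain c1 c2 where c12: "c1 \<ge> 0" "c2 \<ge> 0" and Bdb: "\<And>\<sigma> Z d. \<sigma> \<in> W \<Longrightarrow> Z \<subseteq> {..<k} \<Longrightarrow> real (Bd \<sigma> Z d) \<le>
      exp ((hh + e / 2) * real (\<Sum>z\<in>Z. card (fw z d)) + real (card Z) * c1 + (if NC then 0 else real (d + 1) * c2))"
      using Bd_up[of "e/2"] e by force
    have er_lim: "(\<lambda>n. ln (real (card (Delta k K (Suc n)))) / ?s n + (c1 / ?s n + (if NC then 0 else c2 * (real (n + 1) / ?s n)))) \<longlonglongrightarrow> 0 + 0"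
      by (intro tendsto_add lnDelta_lim i err_lim fw_at_top lin_over_lim notNC_k2)
    obtain N2 where N2: "\<forall>n\<ge>N2. norm ((ln (real (card (Delta k K (Suc n)))) / ?s n + (c1 / ?s n + (if NC then 0 else c2 * (real (n + 1) / ?s n)))) - 0) < e / 2"
      using LIMSEQ_D[OF er_lim[simplified] ] e by (metis half_gt_zero)
    have upper: "ln (real (?p n)) / ?s n \<le> hh + e" if n: "n \<ge> N2" for n
    proof -
      let ?Y = "(hh + e / 2) * ?s n + c1 + (if NC then 0 else real (n + 1) * c2)"
      have Dpos: "0 < card (Delta k K (Suc n))" using finite_Delta[of "Suc n"] Nil_Delta[of "Suc n"] by (auto simp: card_gt_0_iff)
      have "real (?p n) \<le> real (\<Sum>\<sigma>\<in>Delta k K (Suc n). Bd \<sigma> {i} n)" using stem_ub[OF i, of n] by linarith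
      also have "\<dots> = (\<Sum>\<sigma>\<in>Delta k K (Suc n). real (Bd \<sigma> {i} n))" by simp
      also have "\<dots> \<le> real (card (Delta k K (Suc n))) * exp ?Y"
      proof (rule sum_bounded_above)
        fix \<sigma> assume "\<sigma> \<in> Delta k K (Suc n)"
        then have "\<sigma> \<in> W" by (simp add: Delta_def)
        then show "real (Bd \<sigma> {i} n) \<le> exp ?Y" using Bdb[of \<sigma> "{i}" n] i by simp
      qed
      finally have "ln (real (?p n)) \<le> ln (real (card (Delta k K (Suc n)))) + ?Y"
        using p1[of n] Dpos by (intro ln_le_from) auto
      then have "ln (real (?p n)) / ?s n \<le> (ln (real (card (Delta k K (Suc n)))) + ?Y) / ?s n"
        using s1[of n] by (intro divide_right_mono) auto
      also have "\<dots> = hh + e / 2 + (ln (real (card (Delta k K (Suc n)))) / ?s n + (c1 / ?s n + (if NC then 0 else c2 * (real (n + 1) / ?s n))))"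
      proof -
        have sn0: "?s n \<noteq> 0" using s1[of n] by linarith
        then show ?thesis by (cases NC) (simp_all add: field_simps)
      qed
      also have "\<dots> \<le> hh + e"
      proof -
        let ?er = "ln (real (card (Delta k K (Suc n)))) / ?s n + (c1 / ?s n + (if NC then 0 else c2 * (real (n + 1) / ?s n)))"
        have "norm (?er - 0) < e / 2" using N2 n by blast
        then have "\<bar>?er\<bar> < e / 2" by (simp only: real_norm_def diff_zero)
        then have "?er < e / 2" by (rule le_less_trans[OF abs_ge_self])
        then show ?thesis by linarith
      qed
      finally show ?thesis .
    qed
    show "\<exists>N. \<forall>n\<ge>N. ln (real (?p n)) / ?s n \<le> hh + e \<and> hh - e \<le> ln (real (?p n)) / ?s n"
      using lower upper by (intro exI[of _ "max (max N1 1) N2"]) auto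
  qed
qed

end


context TS1 begin

lemma factor_lb:
  assumes x: "x < k" and m: "m \<ge> 1"
  shows "exp (L m * ee x m) \<le> (\<Sum>b\<in>UNIV. real (A a b) * real (Fa x m b))"
proof -
  obtain b where b: "A a b = 1" using A_row by blast
  have "exp (L m * ee x m) \<le> real (Fa x m b)" by (rule hypL[OF m x])
  also have "\<dots> = real (A a b) * real (Fa x m b)" using b by simp
  also have "\<dots> \<le> (\<Sum>b\<in>UNIV. real (A a b) * real (Fa x m b))" by (rule member_le_sum) auto
  finally show ?thesis .
qed

lemma count_lim: "(\<lambda>n. ln (real (p_count k K X n)) / real (card (Delta k K n))) \<longlonglongrightarrow> hh"
proof (rule LIMSEQ_imp_Suc)
  let ?D = "\<lambda>m. real (card (Delta k K (Suc m)))"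
  let ?p = "\<lambda>m. p_count k K X (Suc m)"
  let ?s0 = "\<lambda>m. real (card (fw 0 m))"
  have D_eq: "?D m = 1 + (\<Sum>x<k. real (card (fw x m)))" for m by (rule card_Delta_Suc)
  have D_ge: "?s0 m \<le> ?D m" for m
  proof -
    have "?s0 m \<le> (\<Sum>x<k. real (card (fw x m)))" by (rule member_le_sum) (use kpos in auto)
    then show ?thesis using D_eq[of m] by linarith
  qed
  have s01: "1 \<le> ?s0 m" for m using card_fw_ge[OF kpos, of m] by simp
  have D1: "1 \<le> ?D m" for m using D_ge[of m] s01[of m] by linarith
  have D_top: "filterlim ?D at_top sequentially"
    by (rule filterlim_at_top_mono[OF fw_at_top[OF kpos]]) (use D_ge in \<open>auto intro: always_eventually\<close>)
  have lab: "real (card (Lab (tree {..<k} m) a)) = (\<Prod>x<k. \<Sum>b\<in>UNIV. real (A a b) * real (Fa x m b))" for m a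
    by (simp add: card_Lab_tree Fa_card)
  have p_ge_lab: "real (card (Lab (tree {..<k} m) a)) \<le> real (?p m)" for m a
    using count_lb[of m a] by simp
  have lab1: "1 \<le> real (card (Lab (tree {..<k} m) a))" for m a
  proof -
    have "(\<Prod>x<k. (1::real)) \<le> (\<Prod>x<k. \<Sum>b\<in>UNIV. real (A a b) * real (Fa x m b))"
    proof (intro prod_mono conjI)
      fix x assume x: "x \<in> {..<k}"
      obtain b where b: "A a b = 1" using A_row by blast
      have "1 \<le> real (Fa x m b)" using Fa_ge1[of x m b] x by simp
      also have "\<dots> = real (A a b) * real (Fa x m b)" using b by simp
      also have "\<dots> \<le> (\<Sum>b\<in>UNIV. real (A a b) * real (Fa x m b))" by (rule member_le_sum) auto
      finally show "1 \<le> (\<Sum>b\<in>UNIV. real (A a b) * real (Fa x m b))" .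
    qed auto
    then show ?thesis using lab by simp
  qed
  have p1: "1 \<le> real (?p m)" for m using lab1[of m undefined] p_ge_lab[of m undefined] by linarith
  show "(\<lambda>m. ln (real (?p m)) / ?D m) \<longlonglongrightarrow> hh"
  proof (rule squeeze_eps)
    fix e :: real assume e: "e > 0"
    have lo_lim: "(\<lambda>m. L m - lnC * (1 + real k) / ?D m) \<longlonglongrightarrow> hh - 0"
      by (intro tendsto_diff L_lim_hh const_over_lim D_top)
    obtain N1 where N1: "\<forall>m\<ge>N1. norm ((L m - lnC * (1 + real k) / ?D m) - hh) < e"
      using LIMSEQ_D[OF lo_lim e] by auto
    have lower: "hh - e \<le> ln (real (?p m)) / ?D m" if m: "m \<ge> max N1 1" for m
    proof -
      have m1: "m \<ge> 1" using m by simp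
      have "exp (\<Sum>x<k. L m * ee x m) = (\<Prod>x<k. exp (L m * ee x m))" by (simp add: exp_sum)
      also have "\<dots> \<le> (\<Prod>x<k. \<Sum>b\<in>UNIV. real (A a b) * real (Fa x m b))"
        by (intro prod_mono conjI factor_lb m1) auto
      also have "\<dots> \<le> real (?p m)" using lab[of m a] p_ge_lab[of m a] by simp
      finally have "exp (\<Sum>x<k. L m * ee x m) \<le> real (?p m)" .
      then have "ln (exp (\<Sum>x<k. L m * ee x m)) \<le> ln (real (?p m))"
        using p1[of m] by (subst ln_le_cancel_iff) auto
      then have "(\<Sum>x<k. L m * ee x m) \<le> ln (real (?p m))" by simp
      moreover have "(\<Sum>x<k. L m * ee x m) = L m * (?D m - 1 - real k)"
      proof -
        have "(\<Sum>x<k. L m * ee x m) = L m * (\<Sum>x<k. ee x m)" by (rule sum_distrib_left[symmetric])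
        also have "(\<Sum>x<k. ee x m) = (\<Sum>x<k. real (card (fw x m))) - real k"
          by (simp add: ee_def sum_subtractf)
        also have "\<dots> = ?D m - 1 - real k" using D_eq[of m] by simp
        finally show ?thesis .
      qed
      ultimately have a: "L m * (?D m - 1 - real k) \<le> ln (real (?p m))" by simp
      have Lb: "0 \<le> L m" "L m \<le> lnC" using L_nonneg[OF m1] L_le_U[of m] U_le[OF m1] by auto
      have "L m - lnC * (1 + real k) / ?D m \<le> L m - L m * (1 + real k) / ?D m"
        using Lb D1[of m] by (intro diff_left_mono divide_right_mono mult_right_mono) auto
      also have "\<dots> = L m * (?D m - 1 - real k) / ?D m"
      proof -
        have "?D m \<noteq> 0" using D1[of m] by linarith
        then show ?thesis by (simp add: field_simps)
      qed
      also have "\<dots> \<le> ln (real (?p m)) / ?D m" using a D1[of m] by (intro divide_right_mono) auto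
      finally have "L m - lnC * (1 + real k) / ?D m \<le> ln (real (?p m)) / ?D m" .
      moreover have "hh - e < L m - lnC * (1 + real k) / ?D m" using N1 m by force
      ultimately show ?thesis by linarith
    qed
    obtain c1 c2 where c12: "c1 \<ge> 0" "c2 \<ge> 0" and Bdb: "\<And>\<sigma> Z d. \<sigma> \<in> W \<Longrightarrow> Z \<subseteq> {..<k} \<Longrightarrow> real (Bd \<sigma> Z d) \<le>
      exp ((hh + e / 2) * real (\<Sum>z\<in>Z. card (fw z d)) + real (card Z) * c1 + (if NC then 0 else real (d + 1) * c2))"
      using Bd_up[of "e/2"] e by force
    have lin: "\<not> NC \<Longrightarrow> (\<lambda>m. real (m + 1) / ?D m) \<longlonglongrightarrow> 0"
    proof -
      assume nc: "\<not> NC"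
      have l0: "(\<lambda>m. real (m + 1) / ?s0 m) \<longlonglongrightarrow> 0" by (rule lin_over_lim[OF notNC_k2[OF nc] kpos])
      show ?thesis
      proof (rule tendsto_sandwich[OF _ _ tendsto_const l0])
        show "\<forall>\<^sub>F m in sequentially. 0 \<le> real (m + 1) / ?D m" using D1 by (auto intro: always_eventually)
        show "\<forall>\<^sub>F m in sequentially. real (m + 1) / ?D m \<le> real (m + 1) / ?s0 m"
        proof (rule always_eventually, rule allI)
          fix m
          have "0 < ?D m * ?s0 m" using D1[of m] s01[of m] by (intro mult_pos_pos) auto
          then show "real (m + 1) / ?D m \<le> real (m + 1) / ?s0 m"
            using D_ge[of m] by (intro divide_left_mono) auto
        qed
      qed
    qed
    have er_lim: "(\<lambda>m. ln (?D m) / ?D m + ((lnC + real k * c1) / ?D m + (if NC then 0 else c2 * (real (m + 1) / ?D m)))) \<longlonglongrightarrow> 0 + 0"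
      by (intro tendsto_add ln_over_lim D_top err_lim lin)
    obtain N2 where N2: "\<forall>m\<ge>N2. norm ((ln (?D m) / ?D m + ((lnC + real k * c1) / ?D m + (if NC then 0 else c2 * (real (m + 1) / ?D m)))) - 0) < e / 2"
      using LIMSEQ_D[OF er_lim[simplified]] e by (metis half_gt_zero)
    have he: "0 \<le> hh + e / 2" using hh_nonneg e by simp
    have upper: "ln (real (?p m)) / ?D m \<le> hh + e" if m: "m \<ge> N2" for m
    proof -
      let ?Y = "(hh + e / 2) * (?D m - 1) + real k * c1 + (if NC then 0 else real (m + 1) * c2)"
      have Dpos: "0 < card (Delta k K (Suc m))" using finite_Delta[of "Suc m"] Nil_Delta[of "Suc m"] by (auto simp: card_gt_0_iff)
      have sumk: "real (\<Sum>z<k. card (fw z m)) = ?D m - 1" using D_eq[of m] by simp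
      have "real (?p m) \<le> real (\<Sum>\<sigma>\<in>Delta k K (Suc m). CARD('a) * Bd \<sigma> {..<k} m)" using count_ub[of m] by linarith
      also have "\<dots> = (\<Sum>\<sigma>\<in>Delta k K (Suc m). real CARD('a) * real (Bd \<sigma> {..<k} m))" by simp
      also have "\<dots> \<le> real (card (Delta k K (Suc m))) * exp (lnC + ?Y)"
      proof (rule sum_bounded_above)
        fix \<sigma> assume "\<sigma> \<in> Delta k K (Suc m)"
        then have sW: "\<sigma> \<in> W" by (simp add: Delta_def)
        have "real (Bd \<sigma> {..<k} m) \<le> exp ?Y" using Bdb[OF sW, of "{..<k}" m] sumk by simp
        then have "real CARD('a) * real (Bd \<sigma> {..<k} m) \<le> real CARD('a) * exp ?Y" by (intro mult_left_mono) auto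
        also have "\<dots> = exp (lnC + ?Y)" by (simp add: lnC_def exp_add)
        finally show "real CARD('a) * real (Bd \<sigma> {..<k} m) \<le> exp (lnC + ?Y)" .
      qed
      finally have "ln (real (?p m)) \<le> ln (?D m) + (lnC + ?Y)"
        using p1[of m] Dpos by (intro ln_le_from) auto
      also have "\<dots> \<le> ln (?D m) + lnC + (hh + e / 2) * ?D m + real k * c1 + (if NC then 0 else real (m + 1) * c2)"
        using he by (simp add: algebra_simps)
      finally have a: "ln (real (?p m)) \<le> ln (?D m) + lnC + (hh + e / 2) * ?D m + real k * c1 + (if NC then 0 else real (m + 1) * c2)" .
      have "ln (real (?p m)) / ?D m \<le> (ln (?D m) + lnC + (hh + e / 2) * ?D m + real k * c1 + (if NC then 0 else real (m + 1) * c2)) / ?D m"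
        using a D1[of m] by (intro divide_right_mono) auto
      also have "\<dots> = hh + e / 2 + (ln (?D m) / ?D m + ((lnC + real k * c1) / ?D m + (if NC then 0 else c2 * (real (m + 1) / ?D m))))"
      proof -
        have "?D m \<noteq> 0" using D1[of m] by linarith
        then show ?thesis by (cases NC) (simp_all add: field_simps)
      qed
      also have "\<dots> \<le> hh + e"
      proof -
        let ?er = "ln (?D m) / ?D m + ((lnC + real k * c1) / ?D m + (if NC then 0 else c2 * (real (m + 1) / ?D m)))"
        have "norm (?er - 0) < e / 2" using N2 m by blast
        then have "\<bar>?er\<bar> < e / 2" by (simp only: real_norm_def diff_zero)
        then have "?er < e / 2" by (rule le_less_trans[OF abs_ge_self])
        then show ?thesis by linarith
      qed
      finally show ?thesis .
    qed
    show "\<exists>N. \<forall>m\<ge>N. ln (real (?p m)) / ?D m \<le> hh + e \<and> hh - e \<le> ln (real (?p m)) / ?D m"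
      using lower upper by (intro exI[of _ "max (max N1 1) N2"]) auto
  qed
qed

end

lemma Delta_k0: "Delta 0 K n = {[]}"
  by (auto simp: Delta_def semigrp_iff is_min_rep_def)

theorem corollary5p5:
  fixes k :: nat and K :: "nat \<Rightarrow> nat \<Rightarrow> nat" and A :: "'a::finite \<Rightarrow> 'a \<Rightarrow> nat"
  assumes "zero_one_on {..<k} K" and "primitive_on {..<k} K"
    and "zero_one_on UNIV A" and "primitive_on UNIV A"
  shows "\<exists>h::real.
     (\<lambda>n. ln (real (p_count k K (hom_tree_shift k K A) n)) / real (card (Delta k K n))) \<longlonglongrightarrow> h
     \<and> (\<forall>i<k. ereal h = stem_entropy k K (hom_tree_shift k K A) i)"
proof (cases "k = 0")
  case True
  let ?c = "ln (real (p_count k K (hom_tree_shift k K A) 0)) / real (card (Delta k K 0))"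
  have "(\<lambda>n. ln (real (p_count k K (hom_tree_shift k K A) n)) / real (card (Delta k K n))) = (\<lambda>n. ?c)"
    using True by (simp add: p_count_def Delta_k0)
  then show ?thesis using True by (intro exI[of _ ?c]) simp
next
  case False
  interpret TS1 k K A
    by unfold_locales (use assms False in auto)
  have "\<forall>i<k. ereal hh = stem_entropy k K X i"
  proof (intro allI impI)
    fix i assume i: "i < k"
    have "(\<lambda>n. ereal (ln (real (p_stem k K X [i] n)) / real (card (Delta_bar k K [i] n)))) \<longlonglongrightarrow> ereal hh"
      using stem_lim[OF i] by (rule tendsto_ereal)
    then have "limsup (\<lambda>n. ereal (ln (real (p_stem k K X [i] n)) / real (card (Delta_bar k K [i] n)))) = ereal hh"
      by (rule lim_imp_Limsup[OF trivial_limit_sequentially])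
    then show "ereal hh = stem_entropy k K X i" by (simp add: stem_entropy_def)
  qed
  then show ?thesis using count_lim by blast
qed


end
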